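(* For $L>0$, $n\in\mathbb N$ and $p_1,\dots,p_{n+1}\in\Lambda_L^*$, $$\mathbf E_L\Big(\prod_{j=1}^n\hat V_L(p_j-p_{j+1})\Big)=\sum_{A\in\mathcal A_n}\prod_{a\in A}\Big\{m_{|a|}\,\delta_{*,L}\Big(\sum_{l\in a}(p_l-p_{l+1})\Big)\prod_{l\in a}\hat B_\#(p_l-p_{l+1})\Big\}.$$
   Context: $\Lambda_L=[-L/2,L/2)^d$, $\Lambda_L^*=(\frac1L\mathbb Z)^d$. For $h:\mathbb R^d\to\mathbb C$, $h_\#$ is the $L$-periodic extension of $h|_{\Lambda_L}$; for $f$ on $\Lambda_L$, $\hat f(p)=\int_{\Lambda_L}e^{-2\pi ip\cdot x}f(x)dx$. $B$ is a real Schwartz function on $\mathbb R^d$. $M$ Poisson with mean $|\Lambda_L|$, $y_{L,\gamma}$ i.i.d. uniform on $\Lambda_L$, $v_\gamma$ i.i.d. real with all moments $m_k=\mathbf E v_\gamma^k$ finite, all independent; $V_L(x)=\sum_{\gamma=1}^Mv_\gamma B_\#(x-y_{L,\gamma})$, $\hat V_L$ its Fourier coefficients, $\mathbf E_L$ joint expectation. $\mathcal A_n$ is the set of partitions of $\{1,\dots,n\}$; $\delta_{*,L}(u)=|\Lambda_L|$ if $u=0$, $0$ otherwise. *)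

theory Defs
  imports "HOL-Probability.Probability" "HOL-Library.Disjoint_Sets"
begin

definition box_L :: "real \<Rightarrow> (real^'d) set" where
  "box_L L = {x. \<forall>i. - L / 2 \<le> x $ i \<and> x $ i < L / 2}"

definition vol_L :: "real \<Rightarrow> 'd::finite itself \<Rightarrow> real" where
  "vol_L L _ = L ^ CARD('d)"

definition dual_lattice :: "real \<Rightarrow> (real^'d) set" where
  "dual_lattice L = {p. \<forall>i. \<exists>k::int. p $ i = of_int k / L}"

text \<open>L-periodic extension of h restricted to \<Lambda>_L.\<close>
definition per_ext :: "real \<Rightarrow> (real^'d \<Rightarrow> 'b) \<Rightarrow> real^'d \<Rightarrow> 'b" where
  "per_ext L h x = h (\<chi> i. x $ i - L * of_int \<lfloor>x $ i / L + 1 / 2\<rfloor>)"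

definition four_coef :: "real \<Rightarrow> (real^'d \<Rightarrow> complex) \<Rightarrow> real^'d \<Rightarrow> complex" where
  "four_coef L f p = (LINT x : box_L L | lborel.
      exp (- 2 * complex_of_real pi * \<i> * complex_of_real (p \<bullet> x)) * f x)"

definition delta_L :: "real \<Rightarrow> 'd::finite itself \<Rightarrow> real^'d \<Rightarrow> complex" where
  "delta_L L t u = (if u = 0 then complex_of_real (vol_L L t) else 0)"

definition partial_deriv :: "'d \<Rightarrow> (real^'d \<Rightarrow> real) \<Rightarrow> real^'d \<Rightarrow> real" where
  "partial_deriv i f x = deriv (\<lambda>t. f (x + t *\<^sub>R axis i 1)) 0"

fun iter_partial :: "'d list \<Rightarrow> (real^'d \<Rightarrow> real) \<Rightarrow> real^'d \<Rightarrow> real" where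
  "iter_partial [] f = f"
| "iter_partial (i # is) f = partial_deriv i (iter_partial is f)"

definition schwartz :: "(real^'d \<Rightarrow> real) \<Rightarrow> bool" where
  "schwartz f \<longleftrightarrow>
     (\<forall>is. continuous_on UNIV (iter_partial is f) \<and>
        (\<forall>i x. (\<lambda>t. iter_partial is f (x + t *\<^sub>R axis i 1)) differentiable (at 0)) \<and>
        (\<forall>k::nat. bounded (range (\<lambda>x. (1 + norm x) ^ k * iter_partial is f x))))"

text \<open>The random potential's Fourier coefficient for a configuration
  (m points, positions ys, couplings vs).\<close>
definition Vhat :: "real \<Rightarrow> (real^'d \<Rightarrow> real) \<Rightarrow> nat \<Rightarrow> (nat \<Rightarrow> real^'d) \<Rightarrow> (nat \<Rightarrow> real)
    \<Rightarrow> real^'d \<Rightarrow> complex" where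
  "Vhat L B m ys vs = four_coef L
     (\<lambda>x. complex_of_real (\<Sum>\<gamma>\<in>{1..m}. vs \<gamma> * per_ext L B (x - ys \<gamma>)))"

definition joint_law :: "real \<Rightarrow> 'd::finite itself \<Rightarrow> real measure
    \<Rightarrow> (nat \<times> (nat \<Rightarrow> real^'d) \<times> (nat \<Rightarrow> real)) measure" where
  "joint_law L t mu =
     measure_pmf (poisson_pmf (vol_L L t)) \<Otimes>\<^sub>M
     (Pi\<^sub>M UNIV (\<lambda>_. uniform_measure lborel (box_L L)) \<Otimes>\<^sub>M Pi\<^sub>M UNIV (\<lambda>_. mu))"

definition moment :: "real measure \<Rightarrow> nat \<Rightarrow> real" where
  "moment mu k = (\<integral>v. v ^ k \<partial>mu)"

end

theory Submission
  imports Defs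
begin

definition intv :: "real^'d \<Rightarrow> bool" where
  "intv k \<longleftrightarrow> (\<forall>i. k $ i \<in> \<int>)"

definition kf :: "real \<Rightarrow> real^'d \<Rightarrow> real^'d" where
  "kf L x = (\<chi> i. of_int \<lfloor>x $ i / L + 1 / 2\<rfloor>)"

lemma box_meas[measurable]: "box_L L \<in> sets lborel"
  unfolding box_L_def by measurable

lemma box_meas_borel[measurable]: "box_L L \<in> sets borel"
  unfolding box_L_def by measurable

lemma intv_kf: "intv (kf L x)"
  unfolding intv_def kf_def by auto

lemma intv_uminus: "intv k \<Longrightarrow> intv (- k)"
  unfolding intv_def by auto

lemma box_shift_iff:
  assumes L: "L > 0" and k: "intv k"
  shows "x - L *\<^sub>R k \<in> box_L L \<longleftrightarrow> k = kf L x"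
proof -
  have "(- L / 2 \<le> x $ i - L * k $ i \<and> x $ i - L * k $ i < L / 2) \<longleftrightarrow> k $ i = of_int \<lfloor>x $ i / L + 1 / 2\<rfloor>" for i
  proof -
    from k obtain n where n: "k $ i = of_int n" unfolding intv_def by (metis Ints_cases)
    have "(- L / 2 \<le> x $ i - L * k $ i \<and> x $ i - L * k $ i < L / 2) \<longleftrightarrow>
          (of_int n \<le> x $ i / L + 1 / 2 \<and> x $ i / L + 1 / 2 < of_int n + 1)"
      using L unfolding n by (auto simp: field_simps)
    also have "\<dots> \<longleftrightarrow> \<lfloor>x $ i / L + 1 / 2\<rfloor> = n" by (simp add: floor_eq_iff)
    also have "\<dots> \<longleftrightarrow> k $ i = of_int \<lfloor>x $ i / L + 1 / 2\<rfloor>" unfolding n by auto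
    finally show ?thesis .
  qed
  then show ?thesis unfolding box_L_def kf_def vec_eq_iff by auto
qed

lemma finite_Kset: "finite {k::real^'d. intv k \<and> (\<forall>i. \<bar>k $ i\<bar> \<le> N)}"
proof -
  define S where "S = (of_int :: int \<Rightarrow> real) ` {-\<lceil>N\<rceil>..\<lceil>N\<rceil>}"
  have "{k::real^'d. intv k \<and> (\<forall>i. \<bar>k $ i\<bar> \<le> N)} \<subseteq> (\<lambda>f. vec_lambda f) ` (PiE UNIV (\<lambda>_. S))"
  proof
    fix k :: "real^'d" assume "k \<in> {k. intv k \<and> (\<forall>i. \<bar>k $ i\<bar> \<le> N)}"
    then have k: "intv k" "\<And>i. \<bar>k $ i\<bar> \<le> N" by auto
    have "k $ i \<in> S" for i
    proof -
      from k(1) obtain n where n: "k $ i = of_int n" unfolding intv_def by (metis Ints_cases)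
      have "\<bar>real_of_int n\<bar> \<le> N" using k(2)[of i] n by simp
      then have "n \<in> {-\<lceil>N\<rceil>..\<lceil>N\<rceil>}"
        by (simp add: abs_le_iff) linarith
      then show ?thesis unfolding S_def n by auto
    qed
    then have "(\<lambda>i. k $ i) \<in> PiE UNIV (\<lambda>_. S)" by auto
    moreover have "k = vec_lambda (\<lambda>i. k $ i)" by simp
    ultimately show "k \<in> (\<lambda>f. vec_lambda f) ` (PiE UNIV (\<lambda>_. S))" by blast
  qed
  moreover have "finite (PiE (UNIV::'d set) (\<lambda>_. S))" unfolding S_def by (intro finite_PiE) auto
  ultimately show ?thesis by (meson finite_imageI finite_subset)
qed

lemma lborel_integral_shift:
  fixes f :: "real^'d \<Rightarrow> 'b::{banach, second_countable_topology}"
  assumes f[measurable]: "f \<in> borel_measurable borel"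
  shows "(\<integral>x. f x \<partial>lborel) = (\<integral>x. f (x + c) \<partial>lborel)"
proof -
  have "(\<integral>x. f x \<partial>lborel) = (\<integral>x. f x \<partial>distr lborel borel ((+) c))"
    by (simp add: lborel_distr_plus)
  also have "\<dots> = (\<integral>x. f (c + x) \<partial>lborel)"
    by (rule integral_distr) auto
  finally show ?thesis by (simp add: add.commute)
qed

lemma emeasure_box_L_finite: "emeasure lborel (box_L L :: (real^'d) set) < \<infinity>"
proof -
  have sub: "(box_L L :: (real^'d) set) \<subseteq> cbox (\<chi> i. - L / 2) (\<chi> i. L / 2)"
    unfolding box_L_def by (auto simp: mem_box_cart less_imp_le)
  have "emeasure lborel (box_L L :: (real^'d) set) \<le> emeasure lborel (cbox (\<chi> i. - L / 2) (\<chi> i. L / 2) :: (real^'d) set)"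
    by (rule emeasure_mono[OF sub]) simp
  also have "\<dots> < \<infinity>" by (simp add: emeasure_lborel_cbox_eq)
  finally show ?thesis .
qed

lemma integrable_box_bounded:
  fixes f :: "real^'d \<Rightarrow> 'b::{banach, second_countable_topology}"
  assumes f[measurable]: "f \<in> borel_measurable borel" and b: "\<And>x. norm (f x) \<le> C"
  shows "integrable lborel (\<lambda>x. indicator (box_L L) x *\<^sub>R f x)"
proof (rule Bochner_Integration.integrable_bound[where f="\<lambda>x. indicator (box_L L) x * C"])
  show "integrable lborel (\<lambda>x. indicator (box_L L) x * C)"
    by (intro integrable_mult_left integrable_real_indicator box_meas emeasure_box_L_finite)
  show "AE x in lborel. norm (indicator (box_L L) x *\<^sub>R f x) \<le> norm (indicator (box_L L) x * C)"
    using b by (auto split: split_indicator intro: order_trans[OF _ abs_ge_self])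
qed measurable

lemma TI:
  fixes h :: "real^'d \<Rightarrow> complex" and L :: real and y :: "real^'d"
  assumes L: "L > 0" and hm[measurable]: "h \<in> borel_measurable borel" and hb: "\<And>x. norm (h x) \<le> C"
    and hp: "\<And>x k. intv k \<Longrightarrow> h (x + L *\<^sub>R k) = h x"
  shows "(\<integral>x. indicator (box_L L) x *\<^sub>R h (x - y) \<partial>lborel) = (\<integral>x. indicator (box_L L) x *\<^sub>R h x \<partial>lborel)"
proof -
  define W :: "real^'d \<Rightarrow> real" where "W = indicator (box_L L)"
  have Wm[measurable]: "W \<in> borel_measurable borel" unfolding W_def by measurable
  have C0: "0 \<le> C" using hb[of 0] norm_ge_zero order_trans by blast
  define N where "N = norm y / L + 2"
  define K where "K = {k::real^'d. intv k \<and> (\<forall>i. \<bar>k $ i\<bar> \<le> N)}"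
  have finK: "finite K" unfolding K_def by (rule finite_Kset)
  have Kint: "\<And>k. k \<in> K \<Longrightarrow> intv k" unfolding K_def by auto
  have kfK: "kf L (x + s) \<in> K \<and> - kf L (x + s) \<in> K" if "x \<in> box_L L" "norm s \<le> norm y" for x s
  proof -
    have "\<bar>kf L (x + s) $ i\<bar> \<le> N" for i
    proof -
      have xi: "-L/2 \<le> x$i" "x$i < L/2" using that(1) unfolding box_L_def by auto
      have si: "\<bar>s$i\<bar> \<le> norm y" using component_le_norm_cart[of s i] that(2) by linarith
      define v where "v = (x$i + s$i)/L + 1/2"
      have "\<bar>x$i + s$i\<bar> \<le> L/2 + norm y" using xi si by linarith
      then have "\<bar>x$i + s$i\<bar> / L \<le> (L/2 + norm y) / L" using L by (simp add: divide_right_mono)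
      moreover have "\<bar>(x$i + s$i) / L\<bar> = \<bar>x$i + s$i\<bar> / L" by (simp only: abs_divide abs_of_pos[OF L])
      moreover have "(L/2 + norm y) / L = 1/2 + norm y / L" using L by (simp add: field_simps)
      ultimately have "\<bar>(x$i + s$i) / L\<bar> \<le> 1/2 + norm y / L" by linarith
      then have v: "\<bar>v\<bar> \<le> norm y / L + 1" unfolding v_def by linarith
      have "\<bar>real_of_int \<lfloor>v\<rfloor>\<bar> \<le> \<bar>v\<bar> + 1"
        using floor_le_iff[of v] le_floor_iff[of _ v] by (simp add: abs_le_iff) linarith
      moreover have "kf L (x + s) $ i = of_int \<lfloor>v\<rfloor>" unfolding kf_def v_def by simp
      ultimately show ?thesis using v unfolding N_def by linarith
    qed
    then show ?thesis unfolding K_def using intv_kf intv_uminus by auto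
  qed
  have sumW: "(\<Sum>k\<in>K. W (z - L *\<^sub>R k)) = 1" if "kf L z \<in> K" for z
  proof -
    have "(\<Sum>k\<in>K. W (z - L *\<^sub>R k)) = (\<Sum>k\<in>K. if k = kf L z then 1 else 0)"
      using box_shift_iff[OF L Kint] unfolding W_def by (intro sum.cong) (auto split: split_indicator)
    also have "\<dots> = 1" using that finK by simp
    finally show ?thesis .
  qed
  have int1: "integrable lborel (\<lambda>x. W x *\<^sub>R (W (x - c) *\<^sub>R h (x - d)))" for c d
    unfolding W_def
    by (rule integrable_box_bounded[where C=C]) (auto simp: indicator_def hb C0)
  have int2: "integrable lborel (\<lambda>x. W x *\<^sub>R (W (x + c) *\<^sub>R h x))" for c
    using int1[of "- c" 0] by simp
  have "(\<integral>x. W x *\<^sub>R h (x - y) \<partial>lborel) =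
        (\<integral>x. (\<Sum>k\<in>K. W x *\<^sub>R (W (x - y - L *\<^sub>R k) *\<^sub>R h (x - y))) \<partial>lborel)"
  proof (rule Bochner_Integration.integral_cong[OF refl])
    fix x
    show "W x *\<^sub>R h (x - y) = (\<Sum>k\<in>K. W x *\<^sub>R (W (x - y - L *\<^sub>R k) *\<^sub>R h (x - y)))"
    proof (cases "x \<in> box_L L")
      case True
      have "kf L (x + - y) \<in> K" using kfK[OF True, of "- y"] by simp
      then have "(\<Sum>k\<in>K. W (x - y - L *\<^sub>R k)) = 1" using sumW[of "x - y"] by simp
      then show ?thesis
        by (simp add: scaleR_sum_right[symmetric] scaleR_sum_left[symmetric] sum_distrib_left[symmetric])
    next
      case False
      then show ?thesis unfolding W_def by simp
    qed
  qed
  also have "\<dots> = (\<Sum>k\<in>K. \<integral>x. W x *\<^sub>R (W (x - y - L *\<^sub>R k) *\<^sub>R h (x - y)) \<partial>lborel)"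
    by (rule Bochner_Integration.integral_sum[where f="\<lambda>k x. W x *\<^sub>R (W (x - y - L *\<^sub>R k) *\<^sub>R h (x - y))"])
       (use int1 in \<open>simp add: diff_diff_eq\<close>)
  also have "\<dots> = (\<Sum>k\<in>K. \<integral>x. W x *\<^sub>R (W (x + (y + L *\<^sub>R k)) *\<^sub>R h x) \<partial>lborel)"
  proof (rule sum.cong[OF refl])
    fix k assume k: "k \<in> K"
    have "(\<integral>x. W x *\<^sub>R (W (x - y - L *\<^sub>R k) *\<^sub>R h (x - y)) \<partial>lborel) =
          (\<integral>x. W (x + (y + L *\<^sub>R k)) *\<^sub>R (W (x + (y + L *\<^sub>R k) - y - L *\<^sub>R k) *\<^sub>R h (x + (y + L *\<^sub>R k) - y)) \<partial>lborel)"
      by (rule lborel_integral_shift) measurable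
    also have "\<dots> = (\<integral>x. W x *\<^sub>R (W (x + (y + L *\<^sub>R k)) *\<^sub>R h x) \<partial>lborel)"
      using hp[OF Kint[OF k]] by (simp add: algebra_simps)
    finally show "(\<integral>x. W x *\<^sub>R (W (x - y - L *\<^sub>R k) *\<^sub>R h (x - y)) \<partial>lborel) =
          (\<integral>x. W x *\<^sub>R (W (x + (y + L *\<^sub>R k)) *\<^sub>R h x) \<partial>lborel)" .
  qed
  also have "\<dots> = (\<integral>x. (\<Sum>k\<in>K. W x *\<^sub>R (W (x + (y + L *\<^sub>R k)) *\<^sub>R h x)) \<partial>lborel)"
    by (rule Bochner_Integration.integral_sum[where f="\<lambda>k x. W x *\<^sub>R (W (x + (y + L *\<^sub>R k)) *\<^sub>R h x)", symmetric])
       (use int2 in simp)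
  also have "\<dots> = (\<integral>x. W x *\<^sub>R h x \<partial>lborel)"
  proof (rule Bochner_Integration.integral_cong[OF refl])
    fix x
    show "(\<Sum>k\<in>K. W x *\<^sub>R (W (x + (y + L *\<^sub>R k)) *\<^sub>R h x)) = W x *\<^sub>R h x"
    proof (cases "x \<in> box_L L")
      case True
      have kk: "- kf L (x + y) \<in> K" using kfK[OF True, of y] by simp
      have "(\<Sum>k\<in>K. W (x + (y + L *\<^sub>R k))) = (\<Sum>k\<in>K. if k = - kf L (x + y) then 1 else 0)"
      proof (rule sum.cong[OF refl])
        fix k assume k: "k \<in> K"
        have "x + (y + L *\<^sub>R k) = (x + y) - L *\<^sub>R (- k)" by (simp add: algebra_simps)
        then have "W (x + (y + L *\<^sub>R k)) = (if - k = kf L (x + y) then 1 else 0)"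
          using box_shift_iff[OF L intv_uminus[OF Kint[OF k]], of "x + y"] unfolding W_def
          by (simp add: indicator_def add.assoc)
        then show "W (x + (y + L *\<^sub>R k)) = (if k = - kf L (x + y) then 1 else 0)"
          by (metis (no_types) minus_minus)
      qed
      also have "\<dots> = 1" using kk finK by simp
      finally show ?thesis
        by (simp add: scaleR_sum_right[symmetric] scaleR_sum_left[symmetric] sum_distrib_left[symmetric])
    next
      case False
      then show ?thesis unfolding W_def by simp
    qed
  qed
  finally show ?thesis unfolding W_def .
qed

lemma measurable_vec_lambda_borel:
  fixes f :: "'a \<Rightarrow> 'd::finite \<Rightarrow> real"
  assumes "\<And>i. (\<lambda>x. f x i) \<in> borel_measurable M"
  shows "(\<lambda>x. (\<chi> i. f x i) :: real^'d) \<in> borel_measurable M"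
proof (subst borel_measurable_euclidean_space, intro ballI)
  fix b :: "real^'d" assume "b \<in> Basis"
  then obtain j where j: "b = axis j 1" unfolding Basis_vec_def by auto
  have "(\<lambda>x. (\<chi> i. f x i) \<bullet> b) = (\<lambda>x. f x j)"
    unfolding j by (simp add: cart_eq_inner_axis[symmetric])
  then show "(\<lambda>x. (\<chi> i. f x i) \<bullet> b) \<in> borel_measurable M" using assms by simp
qed

definition ee :: "real^'d \<Rightarrow> real^'d \<Rightarrow> complex" where
  "ee u x = exp (- 2 * complex_of_real pi * \<i> * complex_of_real (u \<bullet> x))"

lemma ee_add: "ee u (x + y) = ee u x * ee u y"
proof -
  have "- 2 * complex_of_real pi * \<i> * complex_of_real (u \<bullet> (x + y)) =
        - 2 * complex_of_real pi * \<i> * complex_of_real (u \<bullet> x) + - 2 * complex_of_real pi * \<i> * complex_of_real (u \<bullet> y)"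
    by (simp only: inner_add_right of_real_add distrib_left)
  then show ?thesis unfolding ee_def by (simp only: exp_add)
qed

lemma ee_add_left: "ee (u + v) x = ee u x * ee v x"
proof -
  have "- 2 * complex_of_real pi * \<i> * complex_of_real ((u + v) \<bullet> x) =
        - 2 * complex_of_real pi * \<i> * complex_of_real (u \<bullet> x) + - 2 * complex_of_real pi * \<i> * complex_of_real (v \<bullet> x)"
    by (simp only: inner_add_left of_real_add distrib_left)
  then show ?thesis unfolding ee_def by (simp only: exp_add)
qed

lemma norm_ee[simp]: "norm (ee u x) = 1"
  unfolding ee_def by (simp add: norm_exp_eq_Re)

lemma ee_zero[simp]: "ee 0 x = 1"
  unfolding ee_def by simp

lemma ee_cont: "continuous_on UNIV (ee u)"
  unfolding ee_def by (intro continuous_intros)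


lemma ee_meas[measurable]: "ee u \<in> borel_measurable borel"
  by (rule borel_measurable_continuous_onI[OF ee_cont])

lemma ee_sum: "finite A \<Longrightarrow> (\<Prod>j\<in>A. ee (u j) x) = ee (\<Sum>j\<in>A. u j) x"
  by (induction A rule: finite_induct) (auto simp: ee_add_left)

lemma ee_int: "z \<in> \<int> \<Longrightarrow> exp (- 2 * complex_of_real pi * \<i> * complex_of_real z) = 1"
proof -
  assume z: "z \<in> \<int>"
  then have "- z \<in> \<int>" by (metis Ints_minus)
  have "- 2 * complex_of_real pi * \<i> * complex_of_real z = complex_of_real (2 * (- z) * pi) * \<i>"
    by (simp add: algebra_simps)
  then show ?thesis using exp_integer_2pi[OF \<open>- z \<in> \<int>\<close>] by (simp only:)
qed

lemma dual_inner_int: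
  assumes L: "L \<noteq> 0" and u: "u \<in> dual_lattice L" and k: "intv k"
  shows "u \<bullet> (L *\<^sub>R k) \<in> \<int>"
proof -
  have "u $ i * (L * k $ i) \<in> \<int>" for i
  proof -
    from u obtain n :: int where n: "u $ i = of_int n / L" unfolding dual_lattice_def by auto
    from k obtain m :: int where m: "k $ i = of_int m" unfolding intv_def by (metis Ints_cases)
    have "u $ i * (L * k $ i) = of_int (n * m)" using L unfolding n m by simp
    then show ?thesis by simp
  qed
  then show ?thesis unfolding inner_vec_def by (auto intro: Ints_sum)
qed


lemma ee_periodic:
  assumes "L \<noteq> 0" "u \<in> dual_lattice L" "intv k"
  shows "ee u (x + L *\<^sub>R k) = ee u x"
  using ee_int[OF dual_inner_int[OF assms]] unfolding ee_add by (simp add: ee_def)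

lemma dual_diff: "u \<in> dual_lattice L \<Longrightarrow> v \<in> dual_lattice L \<Longrightarrow> u - v \<in> dual_lattice L"
  unfolding dual_lattice_def mem_Collect_eq
proof (intro allI)
  fix i assume u: "\<forall>i. \<exists>k::int. u $ i = of_int k / L" and v: "\<forall>i. \<exists>k::int. v $ i = of_int k / L"
  obtain a :: int where a: "u $ i = of_int a / L" using u by blast
  obtain b :: int where b: "v $ i = of_int b / L" using v by blast
  have "(u - v) $ i = of_int (a - b) / L" by (simp add: a b diff_divide_distrib)
  then show "\<exists>k::int. (u - v) $ i = of_int k / L" by blast
qed

lemma dual_zero: "0 \<in> dual_lattice L"
  unfolding dual_lattice_def by (simp add: exI[of _ 0])

lemma dual_add: "u \<in> dual_lattice L \<Longrightarrow> v \<in> dual_lattice L \<Longrightarrow> u + v \<in> dual_lattice L"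
  unfolding dual_lattice_def mem_Collect_eq
proof (intro allI)
  fix i assume u: "\<forall>i. \<exists>k::int. u $ i = of_int k / L" and v: "\<forall>i. \<exists>k::int. v $ i = of_int k / L"
  obtain a :: int where a: "u $ i = of_int a / L" using u by blast
  obtain b :: int where b: "v $ i = of_int b / L" using v by blast
  have "(u + v) $ i = of_int (a + b) / L" by (simp add: a b add_divide_distrib)
  then show "\<exists>k::int. (u + v) $ i = of_int k / L" by blast
qed

lemma dual_sum: "(\<And>j. j \<in> A \<Longrightarrow> u j \<in> dual_lattice L) \<Longrightarrow> (\<Sum>j\<in>A. u j) \<in> dual_lattice L"
  by (induction A rule: infinite_finite_induct) (auto simp: dual_zero dual_add)


lemma per_ext_periodic:
  assumes L: "L \<noteq> 0" and k: "intv k"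
  shows "per_ext L B (x + L *\<^sub>R k) = per_ext L B x"
proof -
  have "(x + L *\<^sub>R k) $ i - L * of_int \<lfloor>(x + L *\<^sub>R k) $ i / L + 1 / 2\<rfloor> = x $ i - L * of_int \<lfloor>x $ i / L + 1 / 2\<rfloor>" for i
  proof -
    from k obtain m :: int where m: "k $ i = of_int m" unfolding intv_def by (metis Ints_cases)
    have e: "(x + L *\<^sub>R k) $ i / L + 1 / 2 = (x $ i / L + 1 / 2) + of_int m" using L by (simp add: m field_simps)
    have "\<lfloor>(x + L *\<^sub>R k) $ i / L + 1 / 2\<rfloor> = \<lfloor>x $ i / L + 1 / 2\<rfloor> + m" by (simp only: e floor_add_int)
    then show ?thesis by (simp add: m algebra_simps)
  qed
  then have "(\<chi> i. (x + L *\<^sub>R k) $ i - L * of_int \<lfloor>(x + L *\<^sub>R k) $ i / L + 1 / 2\<rfloor>) = 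
     (\<chi> i. x $ i - L * of_int \<lfloor>x $ i / L + 1 / 2\<rfloor>)" by presburger
  then show ?thesis unfolding per_ext_def by (simp only:)
qed

lemma per_ext_meas[measurable]:
  fixes B :: "real^'d \<Rightarrow> 'b::topological_space"
  assumes "B \<in> borel_measurable borel"
  shows "per_ext L B \<in> borel_measurable borel"
proof -
  have "(\<lambda>x. (\<chi> i. x $ i - L * of_int \<lfloor>x $ i / L + 1 / 2\<rfloor>) :: real^'d) \<in> borel_measurable borel"
    by (intro measurable_vec_lambda_borel) measurable
  then have "(\<lambda>x. B ((\<chi> i. x $ i - L * of_int \<lfloor>x $ i / L + 1 / 2\<rfloor>) :: real^'d)) \<in> borel_measurable borel"
    using assms by measurable
  then show ?thesis unfolding per_ext_def[abs_def] .
qed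

lemma per_ext_bound: "(\<And>x. \<bar>B x\<bar> \<le> C) \<Longrightarrow> \<bar>per_ext L B x\<bar> \<le> C"
  unfolding per_ext_def by simp

lemma card_Basis_vec: "card (Basis :: (real^'d) set) = CARD('d)"
  using DIM_cart[where 'a=real and 'b='d] by simp

lemma vol_box:
  assumes L: "L > 0"
  shows "emeasure lborel (box_L L :: (real^'d) set) = ennreal (L ^ CARD('d))"
proof -
  define a :: "real^'d" where "a = (\<chi> i. - L / 2)"
  define b :: "real^'d" where "b = (\<chi> i. L / 2)"
  have prodL: "(\<Prod>\<beta>\<in>(Basis :: (real^'d) set). (b - a) \<bullet> \<beta>) = L ^ CARD('d)"
  proof -
    have "(\<Prod>\<beta>\<in>(Basis :: (real^'d) set). (b - a) \<bullet> \<beta>) = (\<Prod>\<beta>\<in>(Basis :: (real^'d) set). L)"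
    proof (rule prod.cong[OF refl])
      fix \<beta> :: "real^'d" assume "\<beta> \<in> Basis"
      then obtain i where i: "\<beta> = axis i 1" unfolding Basis_vec_def by auto
      show "(b - a) \<bullet> \<beta> = L" unfolding i cart_eq_inner_axis[symmetric] a_def b_def by simp
    qed
    also have "\<dots> = L ^ CARD('d)" by (simp add: card_Basis_vec)
    finally show ?thesis .
  qed
  have le: "\<forall>\<beta>\<in>(Basis :: (real^'d) set). a \<bullet> \<beta> \<le> b \<bullet> \<beta>"
  proof
    fix \<beta> :: "real^'d" assume "\<beta> \<in> Basis"
    then obtain i where i: "\<beta> = axis i 1" unfolding Basis_vec_def by auto
    show "a \<bullet> \<beta> \<le> b \<bullet> \<beta>" unfolding i cart_eq_inner_axis[symmetric] a_def b_def using L by simp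
  qed
  have s1: "box a b \<subseteq> box_L L" unfolding box_L_def a_def b_def by (auto simp: mem_box_cart less_imp_le)
  have s2: "box_L L \<subseteq> cbox a b" unfolding box_L_def a_def b_def by (auto simp: mem_box_cart less_imp_le)
  have "emeasure lborel (box a b) \<le> emeasure lborel (box_L L :: (real^'d) set)"
    by (rule emeasure_mono[OF s1]) simp
  moreover have "emeasure lborel (box_L L :: (real^'d) set) \<le> emeasure lborel (cbox a b)"
    by (rule emeasure_mono[OF s2]) simp
  moreover have "emeasure lborel (box a b) = ennreal (L ^ CARD('d))"
    using le prodL by (simp add: emeasure_lborel_box_eq)
  moreover have "emeasure lborel (cbox a b) = ennreal (L ^ CARD('d))"
    using le prodL by (simp add: emeasure_lborel_cbox_eq)
  ultimately show ?thesis by (metis antisym)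
qed

lemma measure_box:
  assumes L: "L > 0"
  shows "measure lborel (box_L L :: (real^'d) set) = L ^ CARD('d)"
  using vol_box[OF L] L by (simp add: measure_def)

lemma ee_box_integral:
  assumes L: "L > 0" and u: "u \<in> dual_lattice L"
  shows "(\<integral>x. indicator (box_L L) x *\<^sub>R ee u x \<partial>lborel) = delta_L L TYPE('d::finite) u"
proof (cases "u = 0")
  case True
  have "(\<integral>x. indicator (box_L L) x *\<^sub>R ee u x \<partial>lborel) = (\<integral>x. indicator (box_L L :: (real^'d) set) x *\<^sub>R (1::complex) \<partial>lborel)"
    using True by simp
  also have "\<dots> = measure lborel (box_L L :: (real^'d) set) *\<^sub>R 1"
    by (subst integral_scaleR_left) (auto intro!: integrable_real_indicator box_meas emeasure_box_L_finite)
  also have "\<dots> = complex_of_real (L ^ CARD('d))" using measure_box[OF L, where 'd='d] by (simp add: scaleR_conv_of_real)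
  finally show ?thesis using True unfolding delta_L_def vol_L_def by simp
next
  case False
  define y where "y = (1 / (2 * (u \<bullet> u))) *\<^sub>R u"
  have uy: "u \<bullet> y = 1 / 2" using False unfolding y_def by (simp add: inner_commute)
  have eey: "ee u (- y) = -1"
  proof -
    have uy': "u \<bullet> (- y) = - 1 / 2" using uy by simp
    have "complex_of_real (u \<bullet> (- y)) = complex_of_real (- 1 / 2)" by (simp only: uy')
    then have "complex_of_real (u \<bullet> (- y)) = - 1 / 2" by simp
    then have e2: "- 2 * complex_of_real pi * \<i> * complex_of_real (u \<bullet> (- y)) = complex_of_real pi * \<i>" by (simp add: mult.commute)
    have "ee u (- y) = exp (complex_of_real pi * \<i>)" unfolding ee_def by (simp only: e2)
    then show ?thesis by (simp add: exp_pi_i')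
  qed
  have "(\<integral>x. indicator (box_L L) x *\<^sub>R ee u (x - y) \<partial>lborel) = (\<integral>x. indicator (box_L L) x *\<^sub>R ee u x \<partial>lborel)"
    by (rule TI[OF L ee_meas, where C=1]) (use L ee_periodic[OF _ u] in auto)
  moreover have "(\<integral>x. indicator (box_L L) x *\<^sub>R ee u (x - y) \<partial>lborel) = - (\<integral>x. indicator (box_L L) x *\<^sub>R ee u x \<partial>lborel)"
  proof -
    have "(\<integral>x. indicator (box_L L) x *\<^sub>R ee u (x - y) \<partial>lborel) = (\<integral>x. (-1) * (indicator (box_L L) x *\<^sub>R ee u x) \<partial>lborel)"
      using eey by (simp add: ee_add[of u _ "- y", simplified])
    also have "\<dots> = - (\<integral>x. indicator (box_L L) x *\<^sub>R ee u x \<partial>lborel)" by simp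
    finally show ?thesis .
  qed
  ultimately have "(\<integral>x. indicator (box_L L) x *\<^sub>R ee u x \<partial>lborel) = 0" by simp
  then show ?thesis using False unfolding delta_L_def by simp
qed

lemma four_coef_ee: "four_coef L f p = (\<integral>x. indicator (box_L L) x *\<^sub>R (ee p x * f x) \<partial>lborel)"
  unfolding four_coef_def ee_def set_lebesgue_integral_def ..

lemma four_coef_shift:
  fixes B :: "real^'d \<Rightarrow> real"
  assumes L: "L > 0" and q: "q \<in> dual_lattice L" and Bm[measurable]: "B \<in> borel_measurable borel"
    and Bb: "\<And>x. \<bar>B x\<bar> \<le> C"
  shows "four_coef L (\<lambda>x. complex_of_real (per_ext L B (x - y))) q
       = ee q y * four_coef L (\<lambda>x. complex_of_real (per_ext L B x)) q"
proof -
  define h where "h z = ee q z * complex_of_real (per_ext L B z)" for z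
  have hm[measurable]: "h \<in> borel_measurable borel" unfolding h_def[abs_def] by measurable
  have hb: "norm (h z) \<le> C" for z
    unfolding h_def using per_ext_bound[OF Bb, where L=L and x=z] by (simp add: norm_mult)
  have hp: "h (x + L *\<^sub>R k) = h x" if "intv k" for x k
  proof -
    have "per_ext L B (x + L *\<^sub>R k) = per_ext L B x" by (rule per_ext_periodic) (use L that in auto)
    then show ?thesis unfolding h_def using ee_periodic[OF _ q that] L by simp
  qed
  have "four_coef L (\<lambda>x. complex_of_real (per_ext L B (x - y))) q
      = (\<integral>x. ee q y * (indicator (box_L L) x *\<^sub>R h (x - y)) \<partial>lborel)"
    unfolding four_coef_ee h_def
  proof (rule Bochner_Integration.integral_cong[OF refl])
    fix x
    have "ee q x = ee q (x - y) * ee q y" using ee_add[of q "x - y" y] by simp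
    then show "indicator (box_L L) x *\<^sub>R (ee q x * complex_of_real (per_ext L B (x - y))) =
       ee q y * (indicator (box_L L) x *\<^sub>R (ee q (x - y) * complex_of_real (per_ext L B (x - y))))"
      by (simp add: algebra_simps)
  qed
  also have "\<dots> = ee q y * (\<integral>x. indicator (box_L L) x *\<^sub>R h (x - y) \<partial>lborel)" by (rule integral_mult_right_zero)
  also have "\<dots> = ee q y * (\<integral>x. indicator (box_L L) x *\<^sub>R h x \<partial>lborel)"
    using TI[OF L hm hb hp] by simp
  finally show ?thesis unfolding four_coef_ee h_def .
qed

definition fib :: "'a set \<Rightarrow> ('a \<Rightarrow> 'b) \<Rightarrow> 'b \<Rightarrow> 'a set" where
  "fib J g \<gamma> = {j \<in> J. g j = \<gamma>}"

definition kern :: "'a set \<Rightarrow> ('a \<Rightarrow> 'b) \<Rightarrow> 'a set set" where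
  "kern J g = fib J g ` (g ` J)"

lemma kern_partition: "partition_on J (kern J g)"
  unfolding partition_on_def kern_def fib_def disjoint_def by auto

lemma part_unique:
  assumes "partition_on J A" "a \<in> A" "b \<in> A" "j \<in> a" "j \<in> b"
  shows "a = b"
  using assms unfolding partition_on_def disjoint_def by blast

lemma part_exists:
  assumes "partition_on J A" "j \<in> J"
  shows "\<exists>a\<in>A. j \<in> a"
  using assms unfolding partition_on_def by blast

lemma part_sub: "partition_on J A \<Longrightarrow> a \<in> A \<Longrightarrow> a \<subseteq> J"
  unfolding partition_on_def by blast

lemma part_ne: "partition_on J A \<Longrightarrow> a \<in> A \<Longrightarrow> a \<noteq> {}"
  unfolding partition_on_def by blast

lemma prod_fib:
  fixes c :: "'a set \<Rightarrow> 'c::comm_monoid_mult"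
  assumes S: "finite S" and gS: "g ` J \<subseteq> S" and c0: "c {} = 1"
  shows "(\<Prod>\<gamma>\<in>S. c (fib J g \<gamma>)) = (\<Prod>a\<in>kern J g. c a)"
proof -
  have "(\<Prod>\<gamma>\<in>S. c (fib J g \<gamma>)) = (\<Prod>\<gamma>\<in>g ` J. c (fib J g \<gamma>))"
  proof (rule prod.mono_neutral_right[OF S gS])
    show "\<forall>i\<in>S - g ` J. c (fib J g i) = 1"
    proof
      fix i assume "i \<in> S - g ` J"
      then have "fib J g i = {}" unfolding fib_def by auto
      then show "c (fib J g i) = 1" using c0 by simp
    qed
  qed
  also have "\<dots> = (\<Prod>a\<in>kern J g. c a)"
    unfolding kern_def
  proof (rule prod.reindex[symmetric, unfolded comp_def])
    show "inj_on (fib J g) (g ` J)"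
      unfolding inj_on_def fib_def by (auto simp: set_eq_iff)
  qed
  finally show ?thesis .
qed

definition blk :: "'a set set \<Rightarrow> 'a \<Rightarrow> 'a set" where
  "blk A j = (THE a. a \<in> A \<and> j \<in> a)"

lemma blk:
  assumes "partition_on J A" "a \<in> A" "j \<in> a"
  shows "blk A j = a"
  unfolding blk_def using assms part_unique[OF assms(1)] by (intro the_equality) auto

lemma blk_mem:
  assumes "partition_on J A" "j \<in> J"
  shows "blk A j \<in> A \<and> j \<in> blk A j"
  using part_exists[OF assms] blk[OF assms(1)] by metis

lemma card_kern:
  assumes J: "finite J" and A: "partition_on J A"
  shows "card {g \<in> J \<rightarrow>\<^sub>E S. kern J g = A} = card {f \<in> A \<rightarrow>\<^sub>E S. inj_on f A}"
proof -
  define X where "X = {f \<in> A \<rightarrow>\<^sub>E S. inj_on f A}"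
  define Y where "Y = {g \<in> J \<rightarrow>\<^sub>E S. kern J g = A}"
  define \<Phi> where "\<Phi> f = restrict (\<lambda>j. f (blk A j)) J" for f :: "'a set \<Rightarrow> 'b"
  define \<Psi> where "\<Psi> g = restrict (\<lambda>a. g (SOME j. j \<in> a)) A" for g :: "'a \<Rightarrow> 'b"
  have some_in: "(SOME j. j \<in> a) \<in> a" if "a \<in> A" for a
    using part_ne[OF A that] by (simp add: some_in_eq)
  have fibPhi: "fib J (\<Phi> f) (f a) = a" if f: "f \<in> X" and a: "a \<in> A" for f a
  proof -
    have "j \<in> fib J (\<Phi> f) (f a) \<longleftrightarrow> j \<in> a" for j
    proof
      assume "j \<in> fib J (\<Phi> f) (f a)"
      then have j: "j \<in> J" "f (blk A j) = f a" unfolding fib_def \<Phi>_def by auto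
      have "blk A j \<in> A" "j \<in> blk A j" using blk_mem[OF A j(1)] by auto
      then have "blk A j = a" using j(2) f a unfolding X_def inj_on_def by auto
      then show "j \<in> a" using \<open>j \<in> blk A j\<close> by simp
    next
      assume "j \<in> a"
      then show "j \<in> fib J (\<Phi> f) (f a)" using blk[OF A a] part_sub[OF A a] unfolding fib_def \<Phi>_def by auto
    qed
    then show ?thesis by auto
  qed
  have imgPhi: "\<Phi> f ` J = f ` A" for f
  proof
    show "\<Phi> f ` J \<subseteq> f ` A" unfolding \<Phi>_def using blk_mem[OF A] by auto
    show "f ` A \<subseteq> \<Phi> f ` J"
    proof
      fix x assume "x \<in> f ` A"
      then obtain a where a: "a \<in> A" "x = f a" by auto
      obtain j where "j \<in> a" using part_ne[OF A a(1)] by auto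
      then have "j \<in> J" "\<Phi> f j = x" using part_sub[OF A a(1)] blk[OF A a(1)] a unfolding \<Phi>_def by auto
      then show "x \<in> \<Phi> f ` J" by force
    qed
  qed
  have PhiY: "\<Phi> f \<in> Y" if f: "f \<in> X" for f
  proof -
    have "\<Phi> f \<in> J \<rightarrow>\<^sub>E S" using f blk_mem[OF A] unfolding \<Phi>_def X_def by auto
    moreover have "kern J (\<Phi> f) = A"
    proof -
      have "kern J (\<Phi> f) = fib J (\<Phi> f) ` (f ` A)" unfolding kern_def imgPhi ..
      also have "\<dots> = (\<lambda>a. fib J (\<Phi> f) (f a)) ` A" by (simp add: image_image)
      also have "\<dots> = A" using fibPhi[OF f] by simp
      finally show ?thesis .
    qed
    ultimately show ?thesis unfolding Y_def by simp
  qed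
  have injPhi: "inj_on \<Phi> X"
  proof (rule inj_onI)
    fix f1 f2 assume f1: "f1 \<in> X" and f2: "f2 \<in> X" and eq: "\<Phi> f1 = \<Phi> f2"
    show "f1 = f2"
    proof (rule extensionalityI[where A=A])
      show "f1 \<in> extensional A" "f2 \<in> extensional A" using f1 f2 unfolding X_def by (auto simp: PiE_def)
      fix a assume a: "a \<in> A"
      obtain j where j: "j \<in> a" using part_ne[OF A a] by auto
      then have "j \<in> J" using part_sub[OF A a] by auto
      then have "\<Phi> f1 j = f1 a" "\<Phi> f2 j = f2 a" using blk[OF A a j] unfolding \<Phi>_def by auto
      then show "f1 a = f2 a" using eq by simp
    qed
  qed
  have surjPhi: "Y \<subseteq> \<Phi> ` X"
  proof
    fix g assume g: "g \<in> Y"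
    then have gJ: "g \<in> J \<rightarrow>\<^sub>E S" and kg: "kern J g = A" unfolding Y_def by auto
    have blockfib: "a = fib J g (g j)" if "a \<in> A" "j \<in> a" for a j
    proof -
      from that(1) kg obtain \<gamma> where "a = fib J g \<gamma>" unfolding kern_def by auto
      with that(2) show ?thesis unfolding fib_def by auto
    qed
    have "\<Psi> g \<in> X"
    proof -
      have "\<Psi> g \<in> A \<rightarrow>\<^sub>E S" using gJ some_in part_sub[OF A] unfolding \<Psi>_def by auto
      moreover have "inj_on (\<Psi> g) A"
      proof (rule inj_onI)
        fix a b assume a: "a \<in> A" and b: "b \<in> A" and eq: "\<Psi> g a = \<Psi> g b"
        then have "g (SOME j. j \<in> a) = g (SOME j. j \<in> b)" unfolding \<Psi>_def by auto
        then show "a = b" using blockfib[OF a some_in[OF a]] blockfib[OF b some_in[OF b]] by simp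
      qed
      ultimately show ?thesis unfolding X_def by simp
    qed
    moreover have "\<Phi> (\<Psi> g) = g"
    proof (rule extensionalityI[where A=J])
      show "\<Phi> (\<Psi> g) \<in> extensional J" unfolding \<Phi>_def by simp
      show "g \<in> extensional J" using gJ by (auto simp: PiE_def)
      fix j assume j: "j \<in> J"
      have a: "blk A j \<in> A" "j \<in> blk A j" using blk_mem[OF A j] by auto
      have feq: "fib J g (g (SOME j'. j' \<in> blk A j)) = fib J g (g j)"
        using trans[OF blockfib[OF a(1) some_in[OF a(1)], symmetric] blockfib[OF a]] .
      have "j \<in> fib J g (g j)" using j by (simp add: fib_def)
      then have "j \<in> fib J g (g (SOME j'. j' \<in> blk A j))" by (simp only: feq)
      then have "g (SOME j'. j' \<in> blk A j) = g j" unfolding fib_def by simp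
      then show "\<Phi> (\<Psi> g) j = g j" using j a unfolding \<Phi>_def \<Psi>_def by simp
    qed
    ultimately show "g \<in> \<Phi> ` X" by (metis image_eqI)
  qed
  have "\<Phi> ` X = Y" using PhiY surjPhi by auto
  then have "card Y = card X" using card_image[OF injPhi] by simp
  then show ?thesis unfolding X_def Y_def .
qed

definition ffn :: "nat \<Rightarrow> nat \<Rightarrow> nat" where
  "ffn m k = (\<Prod>i\<in>{0..<k}. (m - i))"

lemma comb_sum:
  fixes c :: "'a set \<Rightarrow> 'c::comm_ring_1"
  assumes J: "finite J" and S: "finite S" and c0: "c {} = 1"
  shows "(\<Sum>g\<in>J \<rightarrow>\<^sub>E S. \<Prod>\<gamma>\<in>S. c (fib J g \<gamma>))
       = (\<Sum>A\<in>{P. partition_on J P}. of_nat (ffn (card S) (card A)) * (\<Prod>a\<in>A. c a))"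
proof -
  have "(\<Sum>g\<in>J \<rightarrow>\<^sub>E S. \<Prod>\<gamma>\<in>S. c (fib J g \<gamma>)) = (\<Sum>g\<in>J \<rightarrow>\<^sub>E S. \<Prod>a\<in>kern J g. c a)"
  proof (rule sum.cong[OF refl])
    fix g assume "g \<in> J \<rightarrow>\<^sub>E S"
    then have "g ` J \<subseteq> S" by auto
    then show "(\<Prod>\<gamma>\<in>S. c (fib J g \<gamma>)) = (\<Prod>a\<in>kern J g. c a)" using prod_fib[where c=c, OF S _ c0] by blast
  qed
  also have "\<dots> = (\<Sum>A\<in>{P. partition_on J P}. \<Sum>g\<in>{g. g \<in> J \<rightarrow>\<^sub>E S \<and> kern J g = A}. \<Prod>a\<in>kern J g. c a)"
    by (rule sum.group[symmetric]) (auto simp: J S finite_PiE finitely_many_partition_on kern_partition)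
  also have "\<dots> = (\<Sum>A\<in>{P. partition_on J P}. of_nat (ffn (card S) (card A)) * (\<Prod>a\<in>A. c a))"
  proof (rule sum.cong[OF refl])
    fix A assume "A \<in> {P. partition_on J P}"
    then have A: "partition_on J A" by simp
    have finA: "finite A" using finite_elements[OF J A] .
    have "(\<Sum>g\<in>{g. g \<in> J \<rightarrow>\<^sub>E S \<and> kern J g = A}. \<Prod>a\<in>kern J g. c a)
        = (\<Sum>g\<in>{g. g \<in> J \<rightarrow>\<^sub>E S \<and> kern J g = A}. \<Prod>a\<in>A. c a)" by (rule sum.cong) auto
    also have "\<dots> = of_nat (card {g \<in> J \<rightarrow>\<^sub>E S. kern J g = A}) * (\<Prod>a\<in>A. c a)"
      by (simp add: Collect_conj_eq)
    also have "card {g \<in> J \<rightarrow>\<^sub>E S. kern J g = A} = card {f \<in> A \<rightarrow>\<^sub>E S. inj_on f A}"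
      by (rule card_kern[OF J A])
    also have "\<dots> = ffn (card S) (card A)"
      using card_inj_on_subset_funcset[OF finA S subset_refl] unfolding ffn_def by simp
    finally show "(\<Sum>g\<in>{g. g \<in> J \<rightarrow>\<^sub>E S \<and> kern J g = A}. \<Prod>a\<in>kern J g. c a)
        = of_nat (ffn (card S) (card A)) * (\<Prod>a\<in>A. c a)" .
  qed
  finally show ?thesis .
qed

lemma ffn_fact: "ffn (i + k) k * fact i = (fact (i + k) :: nat)"
proof (induction k)
  case 0 then show ?case by (simp add: ffn_def)
next
  case (Suc k)
  have "ffn (i + Suc k) (Suc k) = (i + Suc k) * ffn (i + k) k"
    unfolding ffn_def by (subst prod.atLeast0_lessThan_Suc_shift) simp
  then show ?case using Suc by (simp add: algebra_simps)
qed

lemma ffn_zero: "m < k \<Longrightarrow> ffn m k = 0"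
  unfolding ffn_def by (rule prod_zero) auto

lemma poisson_ffn_sums:
  assumes lam: "0 < lam"
  shows "(\<lambda>m. pmf (poisson_pmf lam) m * real (ffn m k)) sums (lam ^ k)"
proof -
  have "(\<lambda>i. lam ^ k * exp (- lam) * (lam ^ i / fact i)) sums (lam ^ k * exp (- lam) * exp lam)"
    using exp_converges[of lam] by (intro sums_mult) (simp add: divide_inverse scaleR_conv_of_real mult.commute)
  moreover have "lam ^ k * exp (- lam) * exp lam = lam ^ k" by (simp add: exp_minus field_simps)
  moreover have "pmf (poisson_pmf lam) (i + k) * real (ffn (i + k) k) = lam ^ k * exp (- lam) * (lam ^ i / fact i)" for i
  proof -
    have "real (ffn (i + k) k) * fact i = fact (i + k)" using ffn_fact[of i k] by (metis of_nat_fact of_nat_mult)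
    then have "real (ffn (i + k) k) = fact (i + k) / fact i" by (simp add: field_simps)
    then show ?thesis using lam by (simp add: power_add field_simps)
  qed
  ultimately have "(\<lambda>i. pmf (poisson_pmf lam) (i + k) * real (ffn (i + k) k)) sums (lam ^ k)" by simp
  then show ?thesis by (subst (asm) sums_zero_iff_shift) (auto simp: ffn_zero)
qed

lemma poisson_ffn:
  assumes lam: "0 < lam"
  shows "integrable (measure_pmf (poisson_pmf lam)) (\<lambda>m. real (ffn m k))"
    and "(\<integral>m. real (ffn m k) \<partial>measure_pmf (poisson_pmf lam)) = lam ^ k"
proof -
  have nn: "(\<integral>\<^sup>+ m. ennreal (real (ffn m k)) \<partial>measure_pmf (poisson_pmf lam)) = ennreal (lam ^ k)"
  proof -
    have "(\<integral>\<^sup>+ m. ennreal (real (ffn m k)) \<partial>measure_pmf (poisson_pmf lam))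
        = (\<integral>\<^sup>+ m. ennreal (pmf (poisson_pmf lam) m * real (ffn m k)) \<partial>count_space UNIV)"
      unfolding nn_integral_measure_pmf by (simp add: ennreal_mult')
    also have "\<dots> = (\<Sum>m. ennreal (pmf (poisson_pmf lam) m * real (ffn m k)))"
      by (rule nn_integral_count_space_nat)
    also have "\<dots> = ennreal (lam ^ k)"
      using poisson_ffn_sums[OF lam, of k] lam by (subst sums_ennreal[THEN iffD2, THEN sums_unique, symmetric]) auto
    finally show ?thesis .
  qed
  show int: "integrable (measure_pmf (poisson_pmf lam)) (\<lambda>m. real (ffn m k))"
    using nn by (subst integrable_iff_bounded) auto
  show "(\<integral>m. real (ffn m k) \<partial>measure_pmf (poisson_pmf lam)) = lam ^ k"
    using nn lam by (subst integral_eq_nn_integral) auto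
qed


lemma pair_prod_integral:
  fixes f :: "'a \<Rightarrow> complex" and g :: "'b \<Rightarrow> complex"
  assumes M1: "prob_space M1" and M2: "prob_space M2"
    and f: "integrable M1 f" and g: "integrable M2 g"
  shows "integrable (M1 \<Otimes>\<^sub>M M2) (\<lambda>(x, y). f x * g y)"
    and "(\<integral>z. (case z of (x, y) \<Rightarrow> f x * g y) \<partial>(M1 \<Otimes>\<^sub>M M2)) = integral\<^sup>L M1 f * integral\<^sup>L M2 g"
proof -
  interpret M1: prob_space M1 by fact
  interpret M2: prob_space M2 by fact
  interpret pair_sigma_finite M1 M2 ..
  have [measurable]: "f \<in> borel_measurable M1" "g \<in> borel_measurable M2" using f g by auto
  show int: "integrable (M1 \<Otimes>\<^sub>M M2) (\<lambda>(x, y). f x * g y)"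
  proof (rule Fubini_integrable)
    show "(\<lambda>(x, y). f x * g y) \<in> borel_measurable (M1 \<Otimes>\<^sub>M M2)" by measurable
    have "(\<lambda>x. \<integral>y. norm (case (x, y) of (x, y) \<Rightarrow> f x * g y) \<partial>M2) = (\<lambda>x. norm (f x) * (\<integral>y. norm (g y) \<partial>M2))"
      by (simp add: norm_mult)
    moreover have "integrable M1 (\<lambda>x. norm (f x) * (\<integral>y. norm (g y) \<partial>M2))"
      using f by (intro integrable_mult_left integrable_norm)
    ultimately show "integrable M1 (\<lambda>x. \<integral>y. norm (case (x, y) of (x, y) \<Rightarrow> f x * g y) \<partial>M2)" by simp
    show "AE x in M1. integrable M2 (\<lambda>y. case (x, y) of (x, y) \<Rightarrow> f x * g y)"
      using g by simp
  qed
  have "(\<integral>z. (case z of (x, y) \<Rightarrow> f x * g y) \<partial>(M1 \<Otimes>\<^sub>M M2)) = (\<integral>x. (\<integral>y. f x * g y \<partial>M2) \<partial>M1)"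
    using integral_fst'[OF int] by simp
  also have "\<dots> = (\<integral>x. f x * integral\<^sup>L M2 g \<partial>M1)" by simp
  also have "\<dots> = integral\<^sup>L M1 f * integral\<^sup>L M2 g" by simp
  finally show "(\<integral>z. (case z of (x, y) \<Rightarrow> f x * g y) \<partial>(M1 \<Otimes>\<^sub>M M2)) = integral\<^sup>L M1 f * integral\<^sup>L M2 g" .
qed

lemma PiM_prod_integral:
  fixes f :: "nat \<Rightarrow> 'a \<Rightarrow> complex"
  assumes M: "prob_space M" and S: "finite S" and f: "\<And>\<gamma>. \<gamma> \<in> S \<Longrightarrow> integrable M (f \<gamma>)"
  shows "integrable (PiM UNIV (\<lambda>_. M)) (\<lambda>x. \<Prod>\<gamma>\<in>S. f \<gamma> (x \<gamma>))"
    and "(\<integral>x. (\<Prod>\<gamma>\<in>S. f \<gamma> (x \<gamma>)) \<partial>PiM UNIV (\<lambda>_. M)) = (\<Prod>\<gamma>\<in>S. integral\<^sup>L M (f \<gamma>))"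
proof -
  interpret product_prob_space "\<lambda>_. M" UNIV
    using M by (simp add: product_prob_space_def product_prob_space_axioms_def product_sigma_finite_def prob_space_imp_sigma_finite)
  define h where "h x = (\<Prod>\<gamma>\<in>S. f \<gamma> (x \<gamma>))" for x :: "nat \<Rightarrow> 'a"
  have hm: "h \<in> borel_measurable (PiM S (\<lambda>_. M))"
    unfolding h_def using f by (intro borel_measurable_prod) (auto intro!: measurable_PiM_component_rev)
  have distr: "distr (PiM UNIV (\<lambda>_. M)) (PiM S (\<lambda>_. M)) (\<lambda>x. restrict x S) = PiM S (\<lambda>_. M)"
    by (rule distr_PiM_restrict_finite[OF S]) simp
  have eq: "(\<lambda>x. \<Prod>\<gamma>\<in>S. f \<gamma> (x \<gamma>)) = (\<lambda>x. h (restrict x S))"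
    unfolding h_def by (intro ext prod.cong) auto
  have rm: "(\<lambda>x. restrict x S) \<in> measurable (PiM UNIV (\<lambda>_. M)) (PiM S (\<lambda>_. M))"
    by (rule measurable_restrict_subset) simp
  have intS: "integrable (PiM S (\<lambda>_. M)) h"
    unfolding h_def by (rule product_integrable_prod[OF S f])
  show "integrable (PiM UNIV (\<lambda>_. M)) (\<lambda>x. \<Prod>\<gamma>\<in>S. f \<gamma> (x \<gamma>))"
    unfolding eq using intS integrable_distr_eq[OF rm hm] distr by simp
  have "(\<integral>x. h (restrict x S) \<partial>PiM UNIV (\<lambda>_. M)) = integral\<^sup>L (PiM S (\<lambda>_. M)) h"
    using integral_distr[OF rm hm] distr by simp
  also have "\<dots> = (\<Prod>\<gamma>\<in>S. integral\<^sup>L M (f \<gamma>))"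
    unfolding h_def by (rule product_integral_prod[OF S f])
  finally show "(\<integral>x. (\<Prod>\<gamma>\<in>S. f \<gamma> (x \<gamma>)) \<partial>PiM UNIV (\<lambda>_. M)) = (\<Prod>\<gamma>\<in>S. integral\<^sup>L M (f \<gamma>))"
    unfolding eq .
qed


definition QQ :: "'y measure \<Rightarrow> real measure \<Rightarrow> ((nat \<Rightarrow> 'y) \<times> (nat \<Rightarrow> real)) measure" where
  "QQ U mu = PiM UNIV (\<lambda>_. U) \<Otimes>\<^sub>M PiM UNIV (\<lambda>_. mu)"

definition cc :: "'y measure \<Rightarrow> real measure \<Rightarrow> ('j \<Rightarrow> 'y \<Rightarrow> complex) \<Rightarrow> (real \<Rightarrow> real) \<Rightarrow> 'j set \<Rightarrow> complex" where
  "cc U mu \<phi> w I = complex_of_real (\<integral>v. w v ^ card I \<partial>mu) * (\<integral>y. (\<Prod>j\<in>I. \<phi> j y) \<partial>U)"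

locale QSetup =
  fixes U :: "'y measure" and mu :: "real measure" and \<phi> :: "'j \<Rightarrow> 'y \<Rightarrow> complex"
    and w :: "real \<Rightarrow> real" and J :: "'j set" and C :: real
  assumes U: "prob_space U" and mu: "prob_space mu" and smu: "sets mu = sets borel"
    and \<phi>m: "\<And>j. j \<in> J \<Longrightarrow> \<phi> j \<in> borel_measurable U"
    and \<phi>b: "\<And>j y. j \<in> J \<Longrightarrow> norm (\<phi> j y) \<le> C"
    and wm: "w \<in> borel_measurable borel"
    and wi: "\<And>k. integrable mu (\<lambda>v. w v ^ k)"
    and J: "finite J"
begin

lemma C0: "J \<noteq> {} \<Longrightarrow> 0 \<le> C"
  using \<phi>b norm_ge_zero order_trans by blast

lemma Phi_int:
  assumes "I \<subseteq> J"
  shows "integrable U (\<lambda>y. \<Prod>j\<in>I. \<phi> j y)"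
proof -
  interpret prob_space U by (rule U)
  have fI: "finite I" using assms J finite_subset by auto
  show ?thesis
  proof (rule integrable_const_bound[where B="\<Prod>j\<in>I. max C 0"])
    have "norm (\<Prod>j\<in>I. \<phi> j x) \<le> (\<Prod>j\<in>I. max C 0)" for x
    proof -
      have "norm (\<Prod>j\<in>I. \<phi> j x) = (\<Prod>j\<in>I. norm (\<phi> j x))" by (simp add: prod_norm)
      also have "\<dots> \<le> (\<Prod>j\<in>I. max C 0)"
      proof (rule prod_mono)
        fix j assume "j \<in> I"
        then have "norm (\<phi> j x) \<le> C" using assms \<phi>b by auto
        then show "0 \<le> norm (\<phi> j x) \<and> norm (\<phi> j x) \<le> max C 0" by simp
      qed
      finally show ?thesis .
    qed
    then show "AE x in U. norm (\<Prod>j\<in>I. \<phi> j x) \<le> (\<Prod>j\<in>I. max C 0)" by simp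
    show "(\<lambda>y. \<Prod>j\<in>I. \<phi> j y) \<in> borel_measurable U"
      using assms \<phi>m by (intro borel_measurable_prod) auto
  qed
qed

lemma W_int: "integrable mu (\<lambda>v. complex_of_real (w v ^ k))"
  using wi[of k] by (rule integrable_of_real)

lemma Q_term:
  fixes g :: "'j \<Rightarrow> nat" and S :: "nat set"
  assumes S: "finite S" and gS: "g ` J \<subseteq> S"
  shows "integrable (QQ U mu) (\<lambda>(ys, vs). \<Prod>j\<in>J. complex_of_real (w (vs (g j))) * \<phi> j (ys (g j)))"
    and "(\<integral>z. (case z of (ys, vs) \<Rightarrow> \<Prod>j\<in>J. complex_of_real (w (vs (g j))) * \<phi> j (ys (g j))) \<partial>QQ U mu)
         = (\<Prod>\<gamma>\<in>S. cc U mu \<phi> w (fib J g \<gamma>))"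
proof -
  define \<Phi> where "\<Phi> \<gamma> y = (\<Prod>j\<in>fib J g \<gamma>. \<phi> j y)" for \<gamma> y
  define Wf where "Wf \<gamma> v = complex_of_real (w v ^ card (fib J g \<gamma>))" for \<gamma> v
  have fibJ: "fib J g \<gamma> \<subseteq> J" for \<gamma> unfolding fib_def by auto
  have pw: "(\<Prod>j\<in>J. complex_of_real (w (vs (g j))) * \<phi> j (ys (g j)))
      = (\<Prod>\<gamma>\<in>S. \<Phi> \<gamma> (ys \<gamma>)) * (\<Prod>\<gamma>\<in>S. Wf \<gamma> (vs \<gamma>))" for ys vs
  proof -
    have "(\<Prod>j\<in>J. complex_of_real (w (vs (g j))) * \<phi> j (ys (g j)))
        = (\<Prod>j\<in>J. \<phi> j (ys (g j))) * (\<Prod>j\<in>J. complex_of_real (w (vs (g j))))"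
      by (simp add: prod.distrib mult.commute)
    also have "(\<Prod>j\<in>J. \<phi> j (ys (g j))) = (\<Prod>\<gamma>\<in>S. \<Prod>j\<in>{x. x \<in> J \<and> g x = \<gamma>}. \<phi> j (ys (g j)))"
      by (rule prod.group[symmetric, OF J S gS])
    also have "\<dots> = (\<Prod>\<gamma>\<in>S. \<Phi> \<gamma> (ys \<gamma>))"
      unfolding \<Phi>_def fib_def by (intro prod.cong refl) auto
    also have "(\<Prod>j\<in>J. complex_of_real (w (vs (g j)))) = (\<Prod>\<gamma>\<in>S. \<Prod>j\<in>{x. x \<in> J \<and> g x = \<gamma>}. complex_of_real (w (vs (g j))))"
      by (rule prod.group[symmetric, OF J S gS])
    also have "\<dots> = (\<Prod>\<gamma>\<in>S. Wf \<gamma> (vs \<gamma>))"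
    proof (rule prod.cong[OF refl])
      fix \<gamma>
      have "(\<Prod>j\<in>{x. x \<in> J \<and> g x = \<gamma>}. complex_of_real (w (vs (g j)))) = (\<Prod>j\<in>fib J g \<gamma>. complex_of_real (w (vs \<gamma>)))"
        unfolding fib_def by (intro prod.cong) auto
      also have "\<dots> = Wf \<gamma> (vs \<gamma>)" unfolding Wf_def by simp
      finally show "(\<Prod>j\<in>{x. x \<in> J \<and> g x = \<gamma>}. complex_of_real (w (vs (g j)))) = Wf \<gamma> (vs \<gamma>)" .
    qed
    finally show ?thesis .
  qed
  have intP: "integrable U (\<Phi> \<gamma>)" for \<gamma> unfolding \<Phi>_def[abs_def] using Phi_int[OF fibJ] by simp
  have intW: "integrable mu (Wf \<gamma>)" for \<gamma> unfolding Wf_def[abs_def] by (rule W_int)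
  have PU: "prob_space (PiM UNIV (\<lambda>_::nat. U))" by (rule prob_space_PiM) (simp add: U)
  have Pmu: "prob_space (PiM UNIV (\<lambda>_::nat. mu))" by (rule prob_space_PiM) (simp add: mu)
  note A = PiM_prod_integral[OF U S intP]
  note B = PiM_prod_integral[OF mu S intW]
  have eqf: "(\<lambda>(ys, vs). \<Prod>j\<in>J. complex_of_real (w (vs (g j))) * \<phi> j (ys (g j)))
      = (\<lambda>(ys, vs). (\<Prod>\<gamma>\<in>S. \<Phi> \<gamma> (ys \<gamma>)) * (\<Prod>\<gamma>\<in>S. Wf \<gamma> (vs \<gamma>)))"
    using pw by auto
  show "integrable (QQ U mu) (\<lambda>(ys, vs). \<Prod>j\<in>J. complex_of_real (w (vs (g j))) * \<phi> j (ys (g j)))"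
    unfolding eqf QQ_def by (rule pair_prod_integral(1)[OF PU Pmu A(1) B(1)])
  have "(\<integral>z. (case z of (ys, vs) \<Rightarrow> \<Prod>j\<in>J. complex_of_real (w (vs (g j))) * \<phi> j (ys (g j))) \<partial>QQ U mu)
      = (\<Prod>\<gamma>\<in>S. integral\<^sup>L U (\<Phi> \<gamma>)) * (\<Prod>\<gamma>\<in>S. integral\<^sup>L mu (Wf \<gamma>))"
    unfolding eqf QQ_def pair_prod_integral(2)[OF PU Pmu A(1) B(1)] A(2) B(2) ..
  also have "\<dots> = (\<Prod>\<gamma>\<in>S. cc U mu \<phi> w (fib J g \<gamma>))"
    unfolding prod.distrib[symmetric] cc_def \<Phi>_def Wf_def by (simp add: mult.commute del: of_real_power)
  finally show "(\<integral>z. (case z of (ys, vs) \<Rightarrow> \<Prod>j\<in>J. complex_of_real (w (vs (g j))) * \<phi> j (ys (g j))) \<partial>QQ U mu)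
         = (\<Prod>\<gamma>\<in>S. cc U mu \<phi> w (fib J g \<gamma>))" .
qed


lemma cc_empty: "cc U mu \<phi> w {} = 1"
proof -
  interpret U: prob_space U by (rule U)
  interpret mu: prob_space mu by (rule mu)
  show ?thesis unfolding cc_def by (simp add: U.prob_space mu.prob_space)
qed

lemma Q_m:
  fixes S :: "nat set"
  assumes S: "finite S"
  shows "integrable (QQ U mu) (\<lambda>(ys, vs). \<Prod>j\<in>J. \<Sum>\<gamma>\<in>S. complex_of_real (w (vs \<gamma>)) * \<phi> j (ys \<gamma>))"
    and "(\<integral>z. (case z of (ys, vs) \<Rightarrow> \<Prod>j\<in>J. \<Sum>\<gamma>\<in>S. complex_of_real (w (vs \<gamma>)) * \<phi> j (ys \<gamma>)) \<partial>QQ U mu)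
         = (\<Sum>A\<in>{P. partition_on J P}. of_nat (ffn (card S) (card A)) * (\<Prod>a\<in>A. cc U mu \<phi> w a))"
proof -
  define F where "F g z = (case z of (ys, vs) \<Rightarrow> \<Prod>j\<in>J. complex_of_real (w (vs (g j))) * \<phi> j (ys (g j)))"
    for g :: "'j \<Rightarrow> nat" and z :: "(nat \<Rightarrow> 'y) \<times> (nat \<Rightarrow> real)"
  have eq: "(\<lambda>z. case z of (ys, vs) \<Rightarrow> \<Prod>j\<in>J. \<Sum>\<gamma>\<in>S. complex_of_real (w (vs \<gamma>)) * \<phi> j (ys \<gamma>))
      = (\<lambda>z. \<Sum>g\<in>J \<rightarrow>\<^sub>E S. F g z)"
  proof
    fix z :: "(nat \<Rightarrow> 'y) \<times> (nat \<Rightarrow> real)"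
    obtain ys vs where z: "z = (ys, vs)" by (cases z)
    show "(case z of (ys, vs) \<Rightarrow> \<Prod>j\<in>J. \<Sum>\<gamma>\<in>S. complex_of_real (w (vs \<gamma>)) * \<phi> j (ys \<gamma>)) = (\<Sum>g\<in>J \<rightarrow>\<^sub>E S. F g z)"
      unfolding z F_def by (simp add: prod_sum_PiE[OF J S])
  qed
  have gS: "g ` J \<subseteq> S" if "g \<in> J \<rightarrow>\<^sub>E S" for g using that by auto
  have intF: "integrable (QQ U mu) (F g)" if "g \<in> J \<rightarrow>\<^sub>E S" for g
    unfolding F_def[abs_def] using Q_term(1)[OF S gS[OF that]] by simp
  show "integrable (QQ U mu) (\<lambda>(ys, vs). \<Prod>j\<in>J. \<Sum>\<gamma>\<in>S. complex_of_real (w (vs \<gamma>)) * \<phi> j (ys \<gamma>))"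
    unfolding eq by (rule Bochner_Integration.integrable_sum[where f=F]) (use intF in auto)
  have "(\<integral>z. (case z of (ys, vs) \<Rightarrow> \<Prod>j\<in>J. \<Sum>\<gamma>\<in>S. complex_of_real (w (vs \<gamma>)) * \<phi> j (ys \<gamma>)) \<partial>QQ U mu)
      = (\<Sum>g\<in>J \<rightarrow>\<^sub>E S. integral\<^sup>L (QQ U mu) (F g))"
    unfolding eq by (rule Bochner_Integration.integral_sum) (use intF in auto)
  also have "\<dots> = (\<Sum>g\<in>J \<rightarrow>\<^sub>E S. \<Prod>\<gamma>\<in>S. cc U mu \<phi> w (fib J g \<gamma>))"
  proof (rule sum.cong[OF refl])
    fix g assume g: "g \<in> J \<rightarrow>\<^sub>E S"
    show "integral\<^sup>L (QQ U mu) (F g) = (\<Prod>\<gamma>\<in>S. cc U mu \<phi> w (fib J g \<gamma>))"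
      unfolding F_def[abs_def] using Q_term(2)[OF S gS[OF g]] by simp
  qed
  also have "\<dots> = (\<Sum>A\<in>{P. partition_on J P}. of_nat (ffn (card S) (card A)) * (\<Prod>a\<in>A. cc U mu \<phi> w a))"
    by (rule comb_sum[where c="cc U mu \<phi> w", OF J S cc_empty])
  finally show "(\<integral>z. (case z of (ys, vs) \<Rightarrow> \<Prod>j\<in>J. \<Sum>\<gamma>\<in>S. complex_of_real (w (vs \<gamma>)) * \<phi> j (ys \<gamma>)) \<partial>QQ U mu)
         = (\<Sum>A\<in>{P. partition_on J P}. of_nat (ffn (card S) (card A)) * (\<Prod>a\<in>A. cc U mu \<phi> w a))" .
qed

end


lemma QQ_prob: "prob_space U \<Longrightarrow> prob_space mu \<Longrightarrow> prob_space (QQ U mu)"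
  unfolding QQ_def by (intro prob_space_pair prob_space_PiM) auto

lemma meas_pmf_pair:
  fixes f :: "nat \<times> 'b \<Rightarrow> 'c::topological_space"
  assumes "\<And>m. (\<lambda>z. f (m, z)) \<in> borel_measurable N"
  shows "f \<in> borel_measurable (measure_pmf p \<Otimes>\<^sub>M N)"
proof -
  have "f \<in> borel_measurable (count_space UNIV \<Otimes>\<^sub>M N)"
    by (rule measurable_pair_measure_countable1) (use assms in auto)
  moreover have "sets (measure_pmf p \<Otimes>\<^sub>M N) = sets (count_space UNIV \<Otimes>\<^sub>M N)"
    by (rule sets_pair_measure_cong) simp_all
  ultimately show ?thesis using measurable_cong_sets[of "measure_pmf p \<Otimes>\<^sub>M N" "count_space UNIV \<Otimes>\<^sub>M N" borel borel] by simp
qed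

lemma outer:
  fixes U :: "'y measure" and \<phi> :: "'j \<Rightarrow> 'y \<Rightarrow> complex"
  assumes QS: "QSetup U mu \<phi> w J C" and lam: "0 < lam"
  shows "integrable (measure_pmf (poisson_pmf lam) \<Otimes>\<^sub>M QQ U mu)
           (\<lambda>(m, ys, vs). \<Prod>j\<in>J. \<Sum>\<gamma>\<in>{1..m}. complex_of_real (w (vs \<gamma>)) * \<phi> j (ys \<gamma>))"
    and "(\<integral>\<omega>. (case \<omega> of (m, ys, vs) \<Rightarrow> \<Prod>j\<in>J. \<Sum>\<gamma>\<in>{1..m}. complex_of_real (w (vs \<gamma>)) * \<phi> j (ys \<gamma>))
             \<partial>(measure_pmf (poisson_pmf lam) \<Otimes>\<^sub>M QQ U mu))
         = (\<Sum>A\<in>{P. partition_on J P}. complex_of_real (lam ^ card A) * (\<Prod>a\<in>A. cc U mu \<phi> w a))"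
proof -
  interpret QSetup U mu \<phi> w J C by (rule QS)
  define P where "P = measure_pmf (poisson_pmf lam)"
  define C' where "C' = max C 0"
  define FF where "FF = (\<lambda>(m::nat, ys::nat \<Rightarrow> 'y, vs::nat \<Rightarrow> real). \<Prod>j\<in>J. \<Sum>\<gamma>\<in>{1..m}. complex_of_real (w (vs \<gamma>)) * \<phi> j (ys \<gamma>))"
  define GR where "GR = (\<lambda>(m::nat, ys::nat \<Rightarrow> 'y, vs::nat \<Rightarrow> real). \<Prod>j\<in>J. \<Sum>\<gamma>\<in>{1..m}. \<bar>w (vs \<gamma>)\<bar> * C')"
  interpret B: QSetup U mu "\<lambda>j y. complex_of_real C'" "\<lambda>v. \<bar>w v\<bar>" J C'
  proof (rule QSetup.intro)
    show "prob_space U" by (rule U)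
    show "prob_space mu" by (rule mu)
    show "sets mu = sets borel" by (rule smu)
    show "finite J" by (rule J)
    fix j assume "j \<in> J"
    show "(\<lambda>y. complex_of_real C') \<in> borel_measurable U" by simp
  next
    fix j y assume "j \<in> J"
    show "norm (complex_of_real C') \<le> C'" unfolding C'_def by simp
  next
    show "(\<lambda>v. \<bar>w v\<bar>) \<in> borel_measurable borel" by (rule borel_measurable_abs[OF wm])
  next
    fix k
    have "(\<lambda>v. \<bar>w v\<bar> ^ k) = (\<lambda>v. \<bar>w v ^ k\<bar>)" by (simp add: power_abs)
    then show "integrable mu (\<lambda>v. \<bar>w v\<bar> ^ k)" using integrable_abs[OF wi[of k]] by simp
  qed
  interpret Pp: prob_space P unfolding P_def by (rule prob_space_measure_pmf)
  interpret Qp: prob_space "QQ U mu" by (rule QQ_prob[OF U mu])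
  interpret PQ: pair_sigma_finite P "QQ U mu" ..
  have Qm_int: "integrable (QQ U mu) (\<lambda>z. FF (m, z))" for m
    using Q_m(1)[of "{1..m}"] unfolding FF_def by simp
  have Qm_val: "(\<integral>z. FF (m, z) \<partial>QQ U mu) = (\<Sum>A\<in>{P. partition_on J P}. of_nat (ffn m (card A)) * (\<Prod>a\<in>A. cc U mu \<phi> w a))" for m
    using Q_m(2)[of "{1..m}"] unfolding FF_def by simp
  have GRc: "(\<lambda>z. complex_of_real (GR (m, z))) = (\<lambda>(ys, vs). \<Prod>j\<in>J. \<Sum>\<gamma>\<in>{1..m}. complex_of_real \<bar>w (vs \<gamma>)\<bar> * complex_of_real C')" for m
    unfolding GR_def by (auto simp: of_real_prod of_real_sum)
  have GR_int: "integrable (QQ U mu) (\<lambda>z. GR (m, z))" for m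
  proof -
    have "integrable (QQ U mu) (\<lambda>z. complex_of_real (GR (m, z)))"
      unfolding GRc using B.Q_m(1)[of "{1..m}"] by simp
    from integrable_Re[OF this] show ?thesis by simp
  qed
  define KB where "KB m = (\<Sum>A\<in>{P. partition_on J P}. real (ffn m (card A)) * norm (\<Prod>a\<in>A. cc U mu (\<lambda>j y. complex_of_real C') (\<lambda>v. \<bar>w v\<bar>) a))" for m
  have GR_val: "(\<integral>z. GR (m, z) \<partial>QQ U mu) \<le> KB m" for m
  proof -
    have "complex_of_real (\<integral>z. GR (m, z) \<partial>QQ U mu) = (\<integral>z. complex_of_real (GR (m, z)) \<partial>QQ U mu)" by simp
    also have "\<dots> = (\<Sum>A\<in>{P. partition_on J P}. of_nat (ffn m (card A)) * (\<Prod>a\<in>A. cc U mu (\<lambda>j y. complex_of_real C') (\<lambda>v. \<bar>w v\<bar>) a))"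
      unfolding GRc using B.Q_m(2)[of "{1..m}"] by simp
    finally have "norm (complex_of_real (\<integral>z. GR (m, z) \<partial>QQ U mu)) \<le> KB m"
      unfolding KB_def by (auto intro!: order_trans[OF norm_sum] sum_mono simp: norm_mult)
    then show ?thesis by simp
  qed
  have FF_le: "norm (FF (m, z)) \<le> GR (m, z)" for m z
  proof -
    obtain ys vs where z: "z = (ys, vs)" by (cases z)
    have "norm (FF (m, z)) = (\<Prod>j\<in>J. norm (\<Sum>\<gamma>\<in>{1..m}. complex_of_real (w (vs \<gamma>)) * \<phi> j (ys \<gamma>)))"
      unfolding FF_def z by (simp add: prod_norm)
    also have "\<dots> \<le> (\<Prod>j\<in>J. \<Sum>\<gamma>\<in>{1..m}. \<bar>w (vs \<gamma>)\<bar> * C')"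
    proof (rule prod_mono, intro conjI norm_ge_zero)
      fix j assume j: "j \<in> J"
      have "norm (\<Sum>\<gamma>\<in>{1..m}. complex_of_real (w (vs \<gamma>)) * \<phi> j (ys \<gamma>)) \<le> (\<Sum>\<gamma>\<in>{1..m}. norm (complex_of_real (w (vs \<gamma>)) * \<phi> j (ys \<gamma>)))"
        by (rule norm_sum)
      also have "\<dots> \<le> (\<Sum>\<gamma>\<in>{1..m}. \<bar>w (vs \<gamma>)\<bar> * C')"
      proof (rule sum_mono)
        fix \<gamma>
        have "norm (\<phi> j (ys \<gamma>)) \<le> C'" using \<phi>b[OF j] unfolding C'_def by (meson max.coboundedI1)
        then show "norm (complex_of_real (w (vs \<gamma>)) * \<phi> j (ys \<gamma>)) \<le> \<bar>w (vs \<gamma>)\<bar> * C'"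
          by (simp add: norm_mult mult_left_mono)
      qed
      finally show "norm (\<Sum>\<gamma>\<in>{1..m}. complex_of_real (w (vs \<gamma>)) * \<phi> j (ys \<gamma>)) \<le> (\<Sum>\<gamma>\<in>{1..m}. \<bar>w (vs \<gamma>)\<bar> * C')" .
    qed
    also have "\<dots> = GR (m, z)" unfolding GR_def z by simp
    finally show ?thesis .
  qed
  have GR_nn: "0 \<le> GR (m, z)" for m z
    by (cases z) (auto simp: GR_def C'_def intro!: zero_le_power sum_nonneg)
  have FFm: "FF \<in> borel_measurable (P \<Otimes>\<^sub>M QQ U mu)"
    unfolding P_def by (rule meas_pmf_pair) (use Qm_int in auto)
  have KB_int: "integrable P KB"
    unfolding KB_def P_def using poisson_ffn(1)[OF lam] by (intro Bochner_Integration.integrable_sum integrable_mult_left) auto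
  have KB_nn: "0 \<le> KB m" for m unfolding KB_def by (intro sum_nonneg) auto
  have "(\<integral>\<^sup>+ x. ennreal (norm (FF x)) \<partial>(P \<Otimes>\<^sub>M QQ U mu)) = (\<integral>\<^sup>+ m. \<integral>\<^sup>+ z. ennreal (norm (FF (m, z))) \<partial>QQ U mu \<partial>P)"
    by (rule Qp.nn_integral_fst[symmetric]) (use FFm in measurable)
  also have "\<dots> \<le> (\<integral>\<^sup>+ m. ennreal (KB m) \<partial>P)"
  proof (rule nn_integral_mono)
    fix m
    have "(\<integral>\<^sup>+ z. ennreal (norm (FF (m, z))) \<partial>QQ U mu) \<le> (\<integral>\<^sup>+ z. ennreal (GR (m, z)) \<partial>QQ U mu)"
      by (rule nn_integral_mono) (simp add: FF_le ennreal_leI)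
    also have "\<dots> = ennreal (\<integral>z. GR (m, z) \<partial>QQ U mu)"
      by (rule nn_integral_eq_integral[OF GR_int]) (simp add: GR_nn)
    also have "\<dots> \<le> ennreal (KB m)" using GR_val by (simp add: ennreal_leI)
    finally show "(\<integral>\<^sup>+ z. ennreal (norm (FF (m, z))) \<partial>QQ U mu) \<le> ennreal (KB m)" .
  qed
  also have "\<dots> = ennreal (integral\<^sup>L P KB)"
    by (rule nn_integral_eq_integral[OF KB_int]) (simp add: KB_nn)
  also have "\<dots> < \<infinity>" by simp
  finally have fin: "(\<integral>\<^sup>+ x. ennreal (norm (FF x)) \<partial>(P \<Otimes>\<^sub>M QQ U mu)) < \<infinity>" .
  have intFF: "integrable (P \<Otimes>\<^sub>M QQ U mu) FF" by (rule integrableI_bounded[OF FFm fin])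
  then show "integrable (measure_pmf (poisson_pmf lam) \<Otimes>\<^sub>M QQ U mu)
           (\<lambda>(m, ys, vs). \<Prod>j\<in>J. \<Sum>\<gamma>\<in>{1..m}. complex_of_real (w (vs \<gamma>)) * \<phi> j (ys \<gamma>))"
    unfolding FF_def P_def .
  have ffc: "integrable P (\<lambda>m. complex_of_real (real (ffn m k)))" for k
    unfolding P_def by (rule integrable_of_real[OF poisson_ffn(1)[OF lam]])
  have "integral\<^sup>L (P \<Otimes>\<^sub>M QQ U mu) FF = (\<integral>m. (\<integral>z. FF (m, z) \<partial>QQ U mu) \<partial>P)"
    by (rule PQ.integral_fst'[OF intFF, symmetric])
  also have "\<dots> = (\<integral>m. (\<Sum>A\<in>{P. partition_on J P}. complex_of_real (real (ffn m (card A))) * (\<Prod>a\<in>A. cc U mu \<phi> w a)) \<partial>P)"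
    unfolding Qm_val by simp
  also have "\<dots> = (\<Sum>A\<in>{P. partition_on J P}. (\<integral>m. complex_of_real (real (ffn m (card A))) * (\<Prod>a\<in>A. cc U mu \<phi> w a) \<partial>P))"
    by (rule Bochner_Integration.integral_sum) (use ffc in \<open>auto intro!: integrable_mult_left\<close>)
  also have "\<dots> = (\<Sum>A\<in>{P. partition_on J P}. complex_of_real (lam ^ card A) * (\<Prod>a\<in>A. cc U mu \<phi> w a))"
  proof (rule sum.cong[OF refl])
    fix A
    have "(\<integral>m. complex_of_real (real (ffn m (card A))) * (\<Prod>a\<in>A. cc U mu \<phi> w a) \<partial>P)
        = complex_of_real (\<integral>m. real (ffn m (card A)) \<partial>P) * (\<Prod>a\<in>A. cc U mu \<phi> w a)"
      by (simp only: integral_mult_left_zero integral_complex_of_real)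
    also have "\<dots> = complex_of_real (lam ^ card A) * (\<Prod>a\<in>A. cc U mu \<phi> w a)"
      unfolding P_def poisson_ffn(2)[OF lam] ..
    finally show "(\<integral>m. complex_of_real (real (ffn m (card A))) * (\<Prod>a\<in>A. cc U mu \<phi> w a) \<partial>P)
        = complex_of_real (lam ^ card A) * (\<Prod>a\<in>A. cc U mu \<phi> w a)" .
  qed
  finally show "(\<integral>\<omega>. (case \<omega> of (m, ys, vs) \<Rightarrow> \<Prod>j\<in>J. \<Sum>\<gamma>\<in>{1..m}. complex_of_real (w (vs \<gamma>)) * \<phi> j (ys \<gamma>))
             \<partial>(measure_pmf (poisson_pmf lam) \<Otimes>\<^sub>M QQ U mu))
         = (\<Sum>A\<in>{P. partition_on J P}. complex_of_real (lam ^ card A) * (\<Prod>a\<in>A. cc U mu \<phi> w a))"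
    unfolding FF_def P_def .
qed


lemma Vhat_expand:
  fixes B :: "real^'d \<Rightarrow> real"
  assumes L: "L > 0" and q: "q \<in> dual_lattice L" and Bm[measurable]: "B \<in> borel_measurable borel"
    and Bb: "\<And>x. \<bar>B x\<bar> \<le> C"
  shows "Vhat L B m ys vs q = (\<Sum>\<gamma>\<in>{1..m}. complex_of_real (vs \<gamma>) *
            (ee q (ys \<gamma>) * four_coef L (\<lambda>x. complex_of_real (per_ext L B x)) q))"
proof -
  define G where "G \<gamma> x = indicator (box_L L) x *\<^sub>R (ee q x * complex_of_real (per_ext L B (x - ys \<gamma>)))" for \<gamma> x
  have Gint: "integrable lborel (G \<gamma>)" for \<gamma>
    unfolding G_def[abs_def]
    by (rule integrable_box_bounded[where C=C]) (auto simp: norm_mult intro: per_ext_bound[OF Bb])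
  have "Vhat L B m ys vs q = (\<integral>x. (\<Sum>\<gamma>\<in>{1..m}. complex_of_real (vs \<gamma>) * G \<gamma> x) \<partial>lborel)"
    unfolding Vhat_def four_coef_ee G_def
    by (rule Bochner_Integration.integral_cong[OF refl])
       (simp add: of_real_sum sum_distrib_left scaleR_sum_right algebra_simps)
  also have "\<dots> = (\<Sum>\<gamma>\<in>{1..m}. complex_of_real (vs \<gamma>) * integral\<^sup>L lborel (G \<gamma>))"
    by (subst Bochner_Integration.integral_sum) (auto intro: Gint)
  also have "\<dots> = (\<Sum>\<gamma>\<in>{1..m}. complex_of_real (vs \<gamma>) *
            (ee q (ys \<gamma>) * four_coef L (\<lambda>x. complex_of_real (per_ext L B x)) q))"
  proof (rule sum.cong[OF refl])
    fix \<gamma>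
    have "integral\<^sup>L lborel (G \<gamma>) = four_coef L (\<lambda>x. complex_of_real (per_ext L B (x - ys \<gamma>))) q"
      unfolding four_coef_ee G_def ..
    also have "\<dots> = ee q (ys \<gamma>) * four_coef L (\<lambda>x. complex_of_real (per_ext L B x)) q"
      by (rule four_coef_shift[OF L q Bm Bb])
    finally show "complex_of_real (vs \<gamma>) * integral\<^sup>L lborel (G \<gamma>) = complex_of_real (vs \<gamma>) *
            (ee q (ys \<gamma>) * four_coef L (\<lambda>x. complex_of_real (per_ext L B x)) q)" by simp
  qed
  finally show ?thesis .
qed

lemma integral_uniform_box:
  fixes f :: "real^'d \<Rightarrow> complex"
  assumes L: "L > 0" and f[measurable]: "f \<in> borel_measurable borel"
  shows "(\<integral>y. f y \<partial>uniform_measure lborel (box_L L))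
       = (\<integral>y. indicator (box_L L) y *\<^sub>R f y \<partial>lborel) / complex_of_real (L ^ CARD('d))"
proof -
  define c where "c = L ^ CARD('d)"
  have c: "0 < c" unfolding c_def using L by simp
  have ud: "uniform_measure lborel (box_L L :: (real^'d) set) = density lborel (\<lambda>x. ennreal (indicator (box_L L) x / c))"
    unfolding uniform_measure_def vol_box[OF L] c_def[symmetric]
    by (rule density_cong) (auto simp: divide_ennreal[symmetric] c ennreal_indicator)
  have "(\<integral>y. f y \<partial>uniform_measure lborel (box_L L)) = (\<integral>y. f y \<partial>density lborel (\<lambda>x. ennreal (indicator (box_L L) x / c)))"
    unfolding ud ..
  also have "\<dots> = (\<integral>y. (indicator (box_L L) y / c) *\<^sub>R f y \<partial>lborel)"
    by (rule integral_density) (auto simp: c less_imp_le)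
  also have "\<dots> = (\<integral>y. (1 / c) *\<^sub>R (indicator (box_L L) y *\<^sub>R f y) \<partial>lborel)"
    by (rule Bochner_Integration.integral_cong) (auto simp: divide_inverse)
  also have "\<dots> = (1 / c) *\<^sub>R (\<integral>y. indicator (box_L L) y *\<^sub>R f y \<partial>lborel)"
    by (rule integral_scaleR_right)
  also have "\<dots> = (\<integral>y. indicator (box_L L) y *\<^sub>R f y \<partial>lborel) / complex_of_real c"
    by (simp add: scaleR_conv_of_real divide_inverse mult.commute)
  finally show ?thesis unfolding c_def .
qed

theorem lemma5:
  fixes L :: real and n :: nat and B :: "real^'d \<Rightarrow> real"
    and mu :: "real measure" and p :: "nat \<Rightarrow> real^'d"
  assumes "L > 0"
    and "schwartz B"
    and "prob_space mu" and "sets mu = sets borel"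
    and "\<forall>k::nat. integrable mu (\<lambda>v. v ^ k)"
    and "\<forall>j\<in>{1..n+1}. p j \<in> dual_lattice L"
  shows "(\<integral>\<omega>. (case \<omega> of (m, ys, vs) \<Rightarrow>
              \<Prod>j\<in>{1..n}. Vhat L B m ys vs (p j - p (Suc j)))
            \<partial>joint_law L TYPE('d) mu)
       = (\<Sum>A\<in>{P. partition_on {1..n} P}.
            \<Prod>a\<in>A. complex_of_real (moment mu (card a))
                  * delta_L L TYPE('d) (\<Sum>l\<in>a. p l - p (Suc l))
                  * (\<Prod>l\<in>a. four_coef L (\<lambda>x. complex_of_real (per_ext L B x)) (p l - p (Suc l))))"
proof -
  note L = assms(1)
  have sch: "continuous_on UNIV (iter_partial [] B) \<and>
        (\<forall>k::nat. bounded (range (\<lambda>x. (1 + norm x) ^ k * iter_partial [] B x)))"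
    using assms(2) unfolding schwartz_def by blast
  then have Bcont: "continuous_on UNIV B" by simp
  from sch have "bounded (range (\<lambda>x. (1 + norm x) ^ 0 * iter_partial [] B x))" by blast
  then have Bbd: "bounded (range B)" by simp
  have Bm[measurable]: "B \<in> borel_measurable borel" by (rule borel_measurable_continuous_onI[OF Bcont])
  obtain CB where CB: "\<And>x. \<bar>B x\<bar> \<le> CB"
    using Bbd unfolding bounded_iff by (metis rangeI real_norm_def)
  define J where "J = {1..n}"
  define q where "q j = p j - p (Suc j)" for j
  have qd: "q j \<in> dual_lattice L" if "j \<in> J" for j
    unfolding q_def using assms(6) that unfolding J_def by (intro dual_diff) auto
  define Bh where "Bh u = four_coef L (\<lambda>x. complex_of_real (per_ext L B x)) u" for u
  define \<phi> where "\<phi> j y = ee (q j) y * Bh (q j)" for j y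
  define U where "U = uniform_measure lborel (box_L L :: (real^'d) set)"
  define lam where "lam = L ^ CARD('d)"
  have lam: "0 < lam" unfolding lam_def using L by simp
  have ve: "emeasure lborel (box_L L :: (real^'d) set) = ennreal lam" using vol_box[OF L] unfolding lam_def .
  have U: "prob_space U" unfolding U_def
    by (rule prob_space_uniform_measure) (use lam in \<open>simp_all add: ve\<close>)
  interpret QS: QSetup U mu \<phi> "\<lambda>v. v" J "\<Sum>j\<in>J. norm (Bh (q j))"
  proof (rule QSetup.intro)
    show "prob_space U" by (rule U)
    show "prob_space mu" by (rule assms(3))
    show "sets mu = sets borel" by (rule assms(4))
    show "finite J" unfolding J_def by simp
    fix j assume "j \<in> J"
    have "\<phi> j \<in> borel_measurable borel" unfolding \<phi>_def[abs_def] by measurable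
    then show "\<phi> j \<in> borel_measurable U" unfolding U_def by (simp cong: measurable_cong_sets)
  next
    fix j y assume j: "j \<in> J"
    have "norm (\<phi> j y) = norm (Bh (q j))" unfolding \<phi>_def by (simp add: norm_mult)
    also have "\<dots> \<le> (\<Sum>j\<in>J. norm (Bh (q j)))"
      by (rule member_le_sum) (use j in \<open>auto simp: J_def\<close>)
    finally show "norm (\<phi> j y) \<le> (\<Sum>j\<in>J. norm (Bh (q j)))" .
  next
    show "(\<lambda>v::real. v) \<in> borel_measurable borel" by simp
  next
    fix k show "integrable mu (\<lambda>v. v ^ k)" using assms(5) by simp
  qed
  have jl: "joint_law L TYPE('d) mu = measure_pmf (poisson_pmf lam) \<Otimes>\<^sub>M QQ U mu"
    unfolding joint_law_def QQ_def U_def lam_def vol_L_def ..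
  have "(\<integral>\<omega>. (case \<omega> of (m, ys, vs) \<Rightarrow> \<Prod>j\<in>{1..n}. Vhat L B m ys vs (p j - p (Suc j))) \<partial>joint_law L TYPE('d) mu)
      = (\<integral>\<omega>. (case \<omega> of (m, ys, vs) \<Rightarrow> \<Prod>j\<in>J. \<Sum>\<gamma>\<in>{1..m}. complex_of_real (vs \<gamma>) * \<phi> j (ys \<gamma>))
             \<partial>(measure_pmf (poisson_pmf lam) \<Otimes>\<^sub>M QQ U mu))"
    unfolding jl
  proof (rule Bochner_Integration.integral_cong[OF refl])
    fix \<omega> :: "nat \<times> (nat \<Rightarrow> real^'d) \<times> (nat \<Rightarrow> real)"
    obtain m ys vs where \<omega>: "\<omega> = (m, ys, vs)" by (cases \<omega>) auto
    have "Vhat L B m ys vs (p j - p (Suc j)) = (\<Sum>\<gamma>\<in>{1..m}. complex_of_real (vs \<gamma>) * \<phi> j (ys \<gamma>))" if "j \<in> J" for j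
      unfolding \<phi>_def Bh_def using Vhat_expand[OF L qd[OF that] Bm CB] unfolding q_def by simp
    then show "(case \<omega> of (m, ys, vs) \<Rightarrow> \<Prod>j\<in>{1..n}. Vhat L B m ys vs (p j - p (Suc j)))
        = (case \<omega> of (m, ys, vs) \<Rightarrow> \<Prod>j\<in>J. \<Sum>\<gamma>\<in>{1..m}. complex_of_real (vs \<gamma>) * \<phi> j (ys \<gamma>))"
      unfolding \<omega> J_def by simp
  qed
  also have "\<dots> = (\<Sum>A\<in>{P. partition_on J P}. complex_of_real (lam ^ card A) * (\<Prod>a\<in>A. cc U mu \<phi> (\<lambda>v. v) a))"
    using outer(2)[OF QS.QSetup_axioms lam] by simp
  also have "\<dots> = (\<Sum>A\<in>{P. partition_on {1..n} P}.
            \<Prod>a\<in>A. complex_of_real (moment mu (card a))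
                  * delta_L L TYPE('d) (\<Sum>l\<in>a. p l - p (Suc l))
                  * (\<Prod>l\<in>a. four_coef L (\<lambda>x. complex_of_real (per_ext L B x)) (p l - p (Suc l))))"
    unfolding J_def[symmetric]
  proof (rule sum.cong[OF refl])
    fix A assume "A \<in> {P. partition_on J P}"
    then have A: "partition_on J A" by simp
    have finA: "finite A" using finite_elements[OF _ A] unfolding J_def by simp
    have cc_eq: "complex_of_real lam * cc U mu \<phi> (\<lambda>v. v) a
        = complex_of_real (moment mu (card a)) * delta_L L TYPE('d) (\<Sum>l\<in>a. p l - p (Suc l))
          * (\<Prod>l\<in>a. four_coef L (\<lambda>x. complex_of_real (per_ext L B x)) (p l - p (Suc l)))" if a: "a \<in> A" for a
    proof -
      have aJ: "a \<subseteq> J" using part_sub[OF A a] .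
      have fina: "finite a" using aJ unfolding J_def by (rule finite_subset) simp
      have sd: "(\<Sum>l\<in>a. q l) \<in> dual_lattice L" using aJ qd by (intro dual_sum) auto
      have pr: "(\<Prod>j\<in>a. \<phi> j y) = ee (\<Sum>l\<in>a. q l) y * (\<Prod>l\<in>a. Bh (q l))" for y
        unfolding \<phi>_def prod.distrib ee_sum[OF fina] ..
      have "(\<integral>y. (\<Prod>j\<in>a. \<phi> j y) \<partial>U) = (\<integral>y. ee (\<Sum>l\<in>a. q l) y \<partial>U) * (\<Prod>l\<in>a. Bh (q l))"
        unfolding pr by simp
      also have "(\<integral>y. ee (\<Sum>l\<in>a. q l) y \<partial>U) = delta_L L TYPE('d) (\<Sum>l\<in>a. q l) / complex_of_real lam"
        unfolding U_def lam_def integral_uniform_box[OF L ee_meas] ee_box_integral[OF L sd] ..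
      finally have "complex_of_real lam * (\<integral>y. (\<Prod>j\<in>a. \<phi> j y) \<partial>U) = delta_L L TYPE('d) (\<Sum>l\<in>a. q l) * (\<Prod>l\<in>a. Bh (q l))"
        using lam by simp
      then show ?thesis unfolding cc_def moment_def q_def Bh_def by (simp add: algebra_simps)
    qed
    have "complex_of_real (lam ^ card A) * (\<Prod>a\<in>A. cc U mu \<phi> (\<lambda>v. v) a) = (\<Prod>a\<in>A. complex_of_real lam * cc U mu \<phi> (\<lambda>v. v) a)"
      by (simp add: prod.distrib)
    also have "\<dots> = (\<Prod>a\<in>A. complex_of_real (moment mu (card a))
                  * delta_L L TYPE('d) (\<Sum>l\<in>a. p l - p (Suc l))
                  * (\<Prod>l\<in>a. four_coef L (\<lambda>x. complex_of_real (per_ext L B x)) (p l - p (Suc l))))"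
      by (rule prod.cong[OF refl]) (rule cc_eq)
    finally show "complex_of_real (lam ^ card A) * (\<Prod>a\<in>A. cc U mu \<phi> (\<lambda>v. v) a) = (\<Prod>a\<in>A. complex_of_real (moment mu (card a))
                  * delta_L L TYPE('d) (\<Sum>l\<in>a. p l - p (Suc l))
                  * (\<Prod>l\<in>a. four_coef L (\<lambda>x. complex_of_real (per_ext L B x)) (p l - p (Suc l))))" .
  qed
  finally show ?thesis .
qed

end
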